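(* Let $X$ be a connected simple graph with countable vertex set, bounded degree and no vertex of degree one; let $M=\sup_{x\in VX}\deg(x)$, $\alpha=\frac{M+\sqrt{M^2+4M}}{2}$, and $f(u)=A_Xu-Q_Xu^2$ for $u\in\mathbb C$. Then for $|u|<1/\alpha$, $$f'(u)(I-f(u))^{-1}=-\frac{d}{du}\log(I-f(u))+u^2\sum_{n=1}^\infty\frac1n\sum_{j=1}^{n-1}j\,f(u)^{n-1-j}[A_X,Q_X]f(u)^{j-1},$$ where $[A_X,Q_X]=A_XQ_X-Q_XA_X$.
   Context: For a graph $X$ with edges $e$ having origin $o(e)$ and terminus $t(e)$, $E_x=\{e:o(e)=x\}$, $\deg(x)=|E_x|$; simple means no loops and no multiple edges. On $\ell^2(VX)$: $(A_Xf)(x)=\sum_{e\in E_x}f(t(e))$, $(D_Xf)(x)=\deg(x)f(x)$, $Q_X=D_X-I$. For $|u|<1/\alpha$ one has $\|f(u)\|<1$ in operator norm, and $\log(I-f(u))$ denotes $-\sum_{n=1}^\infty\frac1n f(u)^n$ (convergent in operator norm, uniformly on compact subsets), with its derivative in $u$. *)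

theory Defs
  imports "HOL-Analysis.Analysis"
begin

text \<open>Operators on l2(V) are modelled as maps on complex-valued functions on the
vertex type; only their behaviour on square-summable functions matters.\<close>

type_synonym 'v op = "('v \<Rightarrow> complex) \<Rightarrow> ('v \<Rightarrow> complex)"

definition ell2 :: "('v \<Rightarrow> complex) set" where
  "ell2 = {g. (\<lambda>x. (cmod (g x))\<^sup>2) summable_on UNIV}"

definition l2norm :: "('v \<Rightarrow> complex) \<Rightarrow> real" where
  "l2norm g = sqrt (infsum (\<lambda>x. (cmod (g x))\<^sup>2) UNIV)"

definition op_bound :: "'v op \<Rightarrow> real \<Rightarrow> bool" where
  "op_bound T c \<longleftrightarrow> (\<forall>g\<in>ell2. T g \<in> ell2 \<and> l2norm (T g) \<le> c * l2norm g)"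

definition op_diff :: "'v op \<Rightarrow> 'v op \<Rightarrow> 'v op" where
  "op_diff T S = (\<lambda>g x. T g x - S g x)"

definition op_tendsto :: "(nat \<Rightarrow> 'v op) \<Rightarrow> 'v op \<Rightarrow> bool" where
  "op_tendsto T S \<longleftrightarrow> (\<forall>\<epsilon>>0. eventually (\<lambda>N. op_bound (op_diff (T N) S) \<epsilon>) sequentially)"

definition op_sums :: "(nat \<Rightarrow> 'v op) \<Rightarrow> 'v op \<Rightarrow> bool" where
  "op_sums T S \<longleftrightarrow> op_tendsto (\<lambda>N g x. \<Sum>n<N. T n g x) S"

definition op_has_deriv :: "(complex \<Rightarrow> 'v op) \<Rightarrow> 'v op \<Rightarrow> complex \<Rightarrow> bool" where
  "op_has_deriv F D u \<longleftrightarrow>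
     (\<forall>\<epsilon>>0. \<exists>\<delta>>0. \<forall>h. h \<noteq> 0 \<and> cmod h < \<delta> \<longrightarrow>
        op_bound (\<lambda>g x. (F (u + h) g x - F u g x) / h - D g x) \<epsilon>)"

definition op_inverse :: "'v op \<Rightarrow> 'v op \<Rightarrow> bool" where
  "op_inverse T R \<longleftrightarrow> (\<exists>K. op_bound R K) \<and>
     (\<forall>g\<in>ell2. T g \<in> ell2 \<and> R (T g) = g \<and> T (R g) = g)"

definition deg :: "('v \<Rightarrow> 'v \<Rightarrow> bool) \<Rightarrow> 'v \<Rightarrow> nat" where
  "deg Adj x = card {y. Adj x y}"

definition opA :: "('v \<Rightarrow> 'v \<Rightarrow> bool) \<Rightarrow> 'v op" where
  "opA Adj g = (\<lambda>x. \<Sum>y\<in>{y. Adj x y}. g y)"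

definition opQ :: "('v \<Rightarrow> 'v \<Rightarrow> bool) \<Rightarrow> 'v op" where
  "opQ Adj g = (\<lambda>x. (of_nat (deg Adj x) - 1) * g x)"

definition fop :: "('v \<Rightarrow> 'v \<Rightarrow> bool) \<Rightarrow> complex \<Rightarrow> 'v op" where
  "fop Adj u g = (\<lambda>x. u * opA Adj g x - u\<^sup>2 * opQ Adj g x)"

definition fop' :: "('v \<Rightarrow> 'v \<Rightarrow> bool) \<Rightarrow> complex \<Rightarrow> 'v op" where
  "fop' Adj u g = (\<lambda>x. opA Adj g x - 2 * u * opQ Adj g x)"

definition one_minus_f :: "('v \<Rightarrow> 'v \<Rightarrow> bool) \<Rightarrow> complex \<Rightarrow> 'v op" where
  "one_minus_f Adj u g = (\<lambda>x. g x - fop Adj u g x)"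

definition commAQ :: "('v \<Rightarrow> 'v \<Rightarrow> bool) \<Rightarrow> 'v op" where
  "commAQ Adj g = (\<lambda>x. opA Adj (opQ Adj g) x - opQ Adj (opA Adj g) x)"

text \<open>n-th term (n = m+1) of log(I - f(u)) = - sum_{n>=1} f(u)^n / n\<close>
definition log_term :: "('v \<Rightarrow> 'v \<Rightarrow> bool) \<Rightarrow> complex \<Rightarrow> nat \<Rightarrow> 'v op" where
  "log_term Adj u m g = (\<lambda>x. - (1 / of_nat (Suc m)) * ((fop Adj u ^^ Suc m) g) x)"

text \<open>n-th term (n = m+1) of sum_{n>=1} 1/n sum_{j=1}^{n-1} j f^{n-1-j} [A,Q] f^{j-1}\<close>
definition comm_term :: "('v \<Rightarrow> 'v \<Rightarrow> bool) \<Rightarrow> complex \<Rightarrow> nat \<Rightarrow> 'v op" where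
  "comm_term Adj u m g = (\<lambda>x. (1 / of_nat (Suc m)) *
      (\<Sum>j\<in>{1..m}. of_nat j *
         ((fop Adj u ^^ (m - j)) (commAQ Adj ((fop Adj u ^^ (j - 1)) g))) x))"

definition sup_deg :: "('v \<Rightarrow> 'v \<Rightarrow> bool) \<Rightarrow> real" where
  "sup_deg Adj = real (Sup (range (deg Adj)))"

definition alpha :: "('v \<Rightarrow> 'v \<Rightarrow> bool) \<Rightarrow> real" where
  "alpha Adj = (sup_deg Adj + sqrt ((sup_deg Adj)\<^sup>2 + 4 * sup_deg Adj)) / 2"

end

theory Submission
  imports Defs
begin

definition bnd :: "('v \<Rightarrow> complex) \<Rightarrow> real \<Rightarrow> bool" where
  "bnd h c \<longleftrightarrow> (\<forall>F. finite F \<longrightarrow> L2_set (\<lambda>x. cmod (h x)) F \<le> c)"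

lemma bnd_nonneg: "bnd h c \<Longrightarrow> 0 \<le> c"
  unfolding bnd_def by (drule spec[of _ "{}"]) simp

lemma bnd_mono: "bnd h c \<Longrightarrow> c \<le> d \<Longrightarrow> bnd h d"
  unfolding bnd_def by force

lemma bnd_point: "bnd h c \<Longrightarrow> cmod (h x) \<le> c"
  unfolding bnd_def by (drule spec[of _ "{x}"]) simp

lemma bnd_zero: "(\<And>e. e > 0 \<Longrightarrow> bnd h e) \<Longrightarrow> h x = 0"
proof -
  assume a: "\<And>e. e > 0 \<Longrightarrow> bnd h e"
  have "cmod (h x) \<le> e" if "e > 0" for e using bnd_point[OF a[OF that]] .
  then have "cmod (h x) \<le> 0" by (meson dense not_le)
  then show ?thesis by simp
qed

lemma bnd_eq: "(\<And>e. e > 0 \<Longrightarrow> bnd (\<lambda>x. h x - k x) e) \<Longrightarrow> h = k"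
proof
  fix x assume "\<And>e. e > 0 \<Longrightarrow> bnd (\<lambda>x. h x - k x) e"
  from bnd_zero[of "\<lambda>x. h x - k x", OF this] show "h x = k x" by simp
qed

lemma bnd_0: "bnd (\<lambda>x. 0) 0"
  unfolding bnd_def by (simp add: L2_set_0')

lemma bnd_add: "bnd h a \<Longrightarrow> bnd k b \<Longrightarrow> bnd (\<lambda>x. h x + k x) (a + b)"
  unfolding bnd_def
proof (intro allI impI)
  fix F :: "'a set" assume h: "\<forall>F. finite F \<longrightarrow> L2_set (\<lambda>x. cmod (h x)) F \<le> a"
    and k: "\<forall>F. finite F \<longrightarrow> L2_set (\<lambda>x. cmod (k x)) F \<le> b" and F: "finite F"
  have "L2_set (\<lambda>x. cmod (h x + k x)) F \<le> L2_set (\<lambda>x. cmod (h x) + cmod (k x)) F"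
    by (rule L2_set_mono) (auto simp: norm_triangle_ineq)
  also have "\<dots> \<le> L2_set (\<lambda>x. cmod (h x)) F + L2_set (\<lambda>x. cmod (k x)) F"
    by (rule L2_set_triangle_ineq)
  also have "\<dots> \<le> a + b" using h k F by (simp add: add_mono)
  finally show "L2_set (\<lambda>x. cmod (h x + k x)) F \<le> a + b" .
qed

lemma bnd_scale: "bnd h a \<Longrightarrow> bnd (\<lambda>x. c * h x) (cmod c * a)"
  unfolding bnd_def
proof (intro allI impI)
  fix F :: "'a set" assume h: "\<forall>F. finite F \<longrightarrow> L2_set (\<lambda>x. cmod (h x)) F \<le> a" and F: "finite F"
  have "L2_set (\<lambda>x. cmod (c * h x)) F = cmod c * L2_set (\<lambda>x. cmod (h x)) F"
    by (simp add: norm_mult L2_set_right_distrib)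
  also have "\<dots> \<le> cmod c * a" using h F by (simp add: mult_left_mono)
  finally show "L2_set (\<lambda>x. cmod (c * h x)) F \<le> cmod c * a" .
qed

lemma bnd_uminus: "bnd h a \<Longrightarrow> bnd (\<lambda>x. - h x) a"
  unfolding bnd_def by simp

lemma bnd_diff: "bnd h a \<Longrightarrow> bnd k b \<Longrightarrow> bnd (\<lambda>x. h x - k x) (a + b)"
  using bnd_add[of h a "\<lambda>x. - k x" b] bnd_uminus[of k b] by simp

lemma bnd_sum: "finite I \<Longrightarrow> (\<And>i. i \<in> I \<Longrightarrow> bnd (h i) (b i)) \<Longrightarrow> bnd (\<lambda>x. \<Sum>i\<in>I. h i x) (\<Sum>i\<in>I. b i)"
proof (induction I rule: finite_induct)
  case empty then show ?case using bnd_0 by simp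
next
  case (insert i I)
  then show ?case using bnd_add[of "h i" "b i" "\<lambda>x. \<Sum>i\<in>I. h i x" "\<Sum>i\<in>I. b i"] by simp
qed

lemma bnd_limit:
  assumes lim: "\<And>x. (\<lambda>n. s n x) \<longlonglongrightarrow> h x" and b: "\<And>n. bnd (s n) c"
  shows "bnd h c"
  unfolding bnd_def
proof (intro allI impI)
  fix F :: "'a set" assume F: "finite F"
  have "(\<lambda>n. L2_set (\<lambda>x. cmod (s n x)) F) \<longlonglongrightarrow> L2_set (\<lambda>x. cmod (h x)) F"
    unfolding L2_set_def
    by (intro tendsto_intros lim)
  moreover have "\<And>n. L2_set (\<lambda>x. cmod (s n x)) F \<le> c" using b F unfolding bnd_def by blast
  ultimately show "L2_set (\<lambda>x. cmod (h x)) F \<le> c"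
    by (meson LIMSEQ_le_const2)
qed

lemma ell2_bnd: assumes "g \<in> ell2" shows "bnd g (l2norm g)"
  unfolding bnd_def
proof (intro allI impI)
  fix F :: "'a set" assume F: "finite F"
  have "(\<Sum>x\<in>F. (cmod (g x))\<^sup>2) \<le> infsum (\<lambda>x. (cmod (g x))\<^sup>2) UNIV"
    using assms F unfolding ell2_def by (intro finite_sum_le_infsum) auto
  then show "L2_set (\<lambda>x. cmod (g x)) F \<le> l2norm g"
    unfolding L2_set_def l2norm_def by simp
qed

lemma bnd_ell2: assumes "bnd g c" shows "g \<in> ell2" "l2norm g \<le> c"
proof -
  have c: "0 \<le> c" using bnd_nonneg[OF assms] .
  have fs: "(\<Sum>x\<in>F. (cmod (g x))\<^sup>2) \<le> c\<^sup>2" if "finite F" for F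
  proof -
    have "L2_set (\<lambda>x. cmod (g x)) F \<le> c" using assms that unfolding bnd_def by blast
    then have "sqrt (\<Sum>x\<in>F. (cmod (g x))\<^sup>2) \<le> c" unfolding L2_set_def .
    moreover have "0 \<le> (\<Sum>x\<in>F. (cmod (g x))\<^sup>2)" by (simp add: sum_nonneg)
    ultimately show ?thesis using c
      by (metis power_mono real_sqrt_ge_zero real_sqrt_pow2)
  qed
  have sm: "(\<lambda>x. (cmod (g x))\<^sup>2) summable_on UNIV"
    by (rule nonneg_bdd_above_summable_on) (auto intro!: bdd_aboveI[where M="c\<^sup>2"] fs)
  then show "g \<in> ell2" unfolding ell2_def by simp
  have "infsum (\<lambda>x. (cmod (g x))\<^sup>2) UNIV \<le> c\<^sup>2"
    by (rule infsum_le_finite_sums[OF sm]) (simp add: fs)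
  then show "l2norm g \<le> c" unfolding l2norm_def using c
    by (simp add: real_sqrt_le_iff real_le_lsqrt)
qed

lemma l2norm_nonneg: "0 \<le> l2norm g" unfolding l2norm_def by (simp add: infsum_nonneg)

lemma ell2_point: "g \<in> ell2 \<Longrightarrow> cmod (g x) \<le> l2norm g"
  by (rule bnd_point[OF ell2_bnd])

definition opb :: "'v op \<Rightarrow> real \<Rightarrow> bool" where
  "opb T c \<longleftrightarrow> 0 \<le> c \<and> (\<forall>g a. bnd g a \<longrightarrow> bnd (T g) (c * a))"

lemma opbD: "opb T c \<Longrightarrow> bnd g a \<Longrightarrow> bnd (T g) (c * a)"
  unfolding opb_def by blast

lemma opb_nonneg: "opb T c \<Longrightarrow> 0 \<le> c" unfolding opb_def by blast

lemma opb_op_bound: fixes T :: "'v op" assumes "opb T c" shows "op_bound T c"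
  unfolding op_bound_def
proof
  fix g :: "'v \<Rightarrow> complex" assume "g \<in> ell2"
  then have "bnd (T g) (c * l2norm g)" using ell2_bnd opbD[OF assms] by blast
  then show "T g \<in> ell2 \<and> l2norm (T g) \<le> c * l2norm g" using bnd_ell2 by blast
qed

lemma op_bound_opb: fixes T :: "'v op" assumes "op_bound T c" "0 \<le> c" shows "opb T c"
  unfolding opb_def
proof (intro conjI allI impI)
  show "0 \<le> c" by fact
  fix g :: "'v \<Rightarrow> complex" and a assume "bnd g a"
  then have g: "g \<in> ell2" "l2norm g \<le> a" using bnd_ell2 by auto
  then have "T g \<in> ell2" "l2norm (T g) \<le> c * l2norm g" using assms unfolding op_bound_def by auto
  moreover have "c * l2norm g \<le> c * a" using g assms(2) by (simp add: mult_left_mono)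
  ultimately show "bnd (T g) (c * a)" using ell2_bnd bnd_mono by (metis order_trans)
qed

lemma opb_mono: fixes T :: "'v op" shows "opb T c \<Longrightarrow> c \<le> d \<Longrightarrow> opb T d"
proof -
  assume a: "opb T c" "c \<le> d"
  show "opb T d" unfolding opb_def
  proof (intro conjI allI impI)
    show "0 \<le> d" using a opb_nonneg by force
    fix g :: "'v \<Rightarrow> complex" and a' assume "bnd g a'"
    then have "bnd (T g) (c * a')" "0 \<le> a'" using opbD[OF a(1)] bnd_nonneg by auto
    then show "bnd (T g) (d * a')" using a(2) by (metis bnd_mono mult_right_mono)
  qed
qed

lemma opb_comp: fixes T :: "'v op" shows "opb T c \<Longrightarrow> opb S d \<Longrightarrow> opb (\<lambda>g. T (S g)) (c * d)"
proof -
  assume a: "opb T c" "opb S d"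
  show ?thesis unfolding opb_def
  proof (intro conjI allI impI)
    show "0 \<le> c * d" using mult_nonneg_nonneg[OF opb_nonneg[OF a(1)] opb_nonneg[OF a(2)]] .
    fix g :: "'v \<Rightarrow> complex" and a' assume "bnd g a'"
    then have "bnd (T (S g)) (c * (d * a'))" using opbD[OF a(1)] opbD[OF a(2)] by blast
    then show "bnd (T (S g)) (c * d * a')" by (simp add: mult.assoc)
  qed
qed

lemma opb_pow: "opb T c \<Longrightarrow> opb (T ^^ n) (c ^ n)"
proof (induction n)
  case 0 then show ?case unfolding opb_def by (simp add: id_def)
next
  case (Suc n)
  then show ?case using opb_comp[of T c "T^^n" "c^n"] by (simp add: o_def)
qed

lemma bnd_sumsq: "bnd g a \<Longrightarrow> finite F \<Longrightarrow> (\<Sum>x\<in>F. (cmod (g x))\<^sup>2) \<le> a\<^sup>2"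
proof -
  assume b: "bnd g a" and F: "finite F"
  have c: "0 \<le> a" using bnd_nonneg[OF b] .
  have "L2_set (\<lambda>x. cmod (g x)) F \<le> a" using b F unfolding bnd_def by blast
  then have "sqrt (\<Sum>x\<in>F. (cmod (g x))\<^sup>2) \<le> a" unfolding L2_set_def .
  moreover have "0 \<le> (\<Sum>x\<in>F. (cmod (g x))\<^sup>2)" by (simp add: sum_nonneg)
  ultimately show ?thesis using c
    by (metis power_mono real_sqrt_ge_zero real_sqrt_pow2)
qed

lemma bnd_intro_sq: "0 \<le> c \<Longrightarrow> (\<And>F. finite F \<Longrightarrow> (\<Sum>x\<in>F. (cmod (h x))\<^sup>2) \<le> c\<^sup>2) \<Longrightarrow> bnd h c"
  unfolding bnd_def L2_set_def
  by (metis real_sqrt_abs real_sqrt_le_mono abs_of_nonneg)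

lemma bnd_pointwise: "bnd g a \<Longrightarrow> 0 \<le> c \<Longrightarrow> (\<And>x. cmod (h x) \<le> c * cmod (g x)) \<Longrightarrow> bnd h (c * a)"
  unfolding bnd_def
proof (intro allI impI)
  fix F :: "'a set" assume g: "\<forall>F. finite F \<longrightarrow> L2_set (\<lambda>x. cmod (g x)) F \<le> a"
    and c: "0 \<le> c" and p: "\<And>x. cmod (h x) \<le> c * cmod (g x)" and F: "finite F"
  have "L2_set (\<lambda>x. cmod (h x)) F \<le> L2_set (\<lambda>x. c * cmod (g x)) F"
    by (rule L2_set_mono) (auto simp: p)
  also have "\<dots> = c * L2_set (\<lambda>x. cmod (g x)) F" using c by (simp add: L2_set_right_distrib)
  also have "\<dots> \<le> c * a" using g F c by (simp add: mult_left_mono)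
  finally show "L2_set (\<lambda>x. cmod (h x)) F \<le> c * a" .
qed

definition lin :: "'v op \<Rightarrow> bool" where
  "lin T \<longleftrightarrow> (\<forall>g h. T (\<lambda>x. g x + h x) = (\<lambda>x. T g x + T h x)) \<and> (\<forall>c g. T (\<lambda>x. c * g x) = (\<lambda>x. c * T g x))"

lemma lin_add: "lin T \<Longrightarrow> T (\<lambda>x. g x + h x) = (\<lambda>x. T g x + T h x)" unfolding lin_def by blast
lemma lin_scale: "lin T \<Longrightarrow> T (\<lambda>x. c * g x) = (\<lambda>x. c * T g x)" unfolding lin_def by blast
lemma lin_uminus: "lin T \<Longrightarrow> T (\<lambda>x. - g x) = (\<lambda>x. - T g x)"
  using lin_scale[of T "-1" g] by simp
lemma lin_diff: "lin T \<Longrightarrow> T (\<lambda>x. g x - h x) = (\<lambda>x. T g x - T h x)"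
  using lin_add[of T g "\<lambda>x. - h x"] lin_uminus[of T h] by simp
lemma lin_zero: "lin T \<Longrightarrow> T (\<lambda>x. 0) = (\<lambda>x. 0)"
  using lin_scale[of T 0 "\<lambda>x. 0"] by simp
lemma lin_sum: assumes T: "lin T" and I: "finite I" shows "T (\<lambda>x. \<Sum>i\<in>I. g i x) = (\<lambda>x. \<Sum>i\<in>I. T (g i) x)"
  using I
proof (induction I rule: finite_induct)
  case empty then show ?case using lin_zero[OF T] by simp
next
  case (insert i I)
  then show ?case using lin_add[OF T, of "g i" "\<lambda>x. \<Sum>i\<in>I. g i x"] by simp
qed
lemma lin_comp: "lin T \<Longrightarrow> lin S \<Longrightarrow> lin (\<lambda>g. T (S g))"
  unfolding lin_def by simp
lemma lin_id: "lin (\<lambda>g. g)" unfolding lin_def by simp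
lemma lin_pow: "lin T \<Longrightarrow> lin (T ^^ n)"
  by (induction n) (simp_all add: lin_id lin_comp o_def id_def)

lemma lin_opA: "lin (opA Adj)"
  unfolding lin_def opA_def by (simp add: sum.distrib sum_distrib_left)
lemma lin_opQ: "lin (opQ Adj)"
  unfolding lin_def opQ_def by (simp add: algebra_simps)
lemma lin_fop: "lin (fop Adj u)"
  unfolding lin_def fop_def
  by (simp add: lin_add[OF lin_opA] lin_scale[OF lin_opA] lin_add[OF lin_opQ] lin_scale[OF lin_opQ] algebra_simps)
lemma lin_fop': "lin (fop' Adj u)"
  unfolding lin_def fop'_def
  by (simp add: lin_add[OF lin_opA] lin_scale[OF lin_opA] lin_add[OF lin_opQ] lin_scale[OF lin_opQ] algebra_simps)
lemma lin_commAQ: "lin (commAQ Adj)"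
  unfolding lin_def commAQ_def
  by (simp add: lin_add[OF lin_opA] lin_scale[OF lin_opA] lin_add[OF lin_opQ] lin_scale[OF lin_opQ] algebra_simps)

lemma sums_opA: "(\<And>y. (\<lambda>m. s m y) sums h y) \<Longrightarrow> (\<lambda>m. opA Adj (s m) x) sums (opA Adj h x)"
  unfolding opA_def by (rule sums_sum) simp
lemma sums_opQ: "(\<And>y. (\<lambda>m. s m y) sums h y) \<Longrightarrow> (\<lambda>m. opQ Adj (s m) x) sums (opQ Adj h x)"
  unfolding opQ_def by (rule sums_mult) simp
lemma sums_fop: "(\<And>y. (\<lambda>m. s m y) sums h y) \<Longrightarrow> (\<lambda>m. fop Adj u (s m) x) sums (fop Adj u h x)"
  unfolding fop_def by (intro sums_diff sums_mult sums_opA sums_opQ)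
lemma sums_fop': "(\<And>y. (\<lambda>m. s m y) sums h y) \<Longrightarrow> (\<lambda>m. fop' Adj u (s m) x) sums (fop' Adj u h x)"
  unfolding fop'_def by (intro sums_diff sums_mult sums_opA sums_opQ)

lemma comm_identity:
  "fop' Adj u (fop Adj u g) = (\<lambda>x. fop Adj u (fop' Adj u g) x + u\<^sup>2 * commAQ Adj g x)"
proof -
  note A = lin_add[OF lin_opA] lin_scale[OF lin_opA] lin_diff[OF lin_opA]
  note Q = lin_add[OF lin_opQ] lin_scale[OF lin_opQ] lin_diff[OF lin_opQ]
  show ?thesis
    unfolding fop'_def fop_def commAQ_def A Q
    by (rule ext) (simp add: algebra_simps power2_eq_square)
qed

locale grph =
  fixes Adj :: "'v \<Rightarrow> 'v \<Rightarrow> bool" and K :: nat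
  assumes irrefl: "\<And>x. \<not> Adj x x"
    and sym: "\<And>x y. Adj x y \<Longrightarrow> Adj y x"
    and fin: "\<And>x. finite {y. Adj x y}"
    and degK: "\<And>x. deg Adj x \<le> K"
    and Mpos: "1 \<le> sup_deg Adj"
begin

abbreviation "M \<equiv> sup_deg Adj"

lemma deg_le: "real (deg Adj x) \<le> M"
proof -
  have "bdd_above (range (deg Adj))" using degK by (auto intro!: bdd_aboveI)
  then have "deg Adj x \<le> Sup (range (deg Adj))" by (rule cSup_upper[OF rangeI])
  then show ?thesis unfolding sup_deg_def by simp
qed

lemma M_nonneg: "0 \<le> M" using Mpos by simp

lemma opb_opA: "opb (opA Adj) M"
  unfolding opb_def
proof (intro conjI allI impI)
  show "0 \<le> M" by (rule M_nonneg)
  fix g :: "'v \<Rightarrow> complex" and a assume g: "bnd g a"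
  have a: "0 \<le> a" using bnd_nonneg[OF g] .
  show "bnd (opA Adj g) (M * a)"
  proof (rule bnd_intro_sq)
    show "0 \<le> M * a" using a M_nonneg by simp
    fix F :: "'v set" assume F: "finite F"
    define N where "N x = {y. Adj x y}" for x
    define G where "G = (\<Union>x\<in>F. N x)"
    have finN: "finite (N x)" for x using fin unfolding N_def by simp
    have G: "finite G" unfolding G_def using F finN by simp
    have p1: "(cmod (opA Adj g x))\<^sup>2 \<le> M * (\<Sum>y\<in>N x. (cmod (g y))\<^sup>2)" for x
    proof -
      have "cmod (opA Adj g x) \<le> (\<Sum>y\<in>N x. cmod (g y))"
        unfolding opA_def N_def by (rule norm_sum)
      then have "(cmod (opA Adj g x))\<^sup>2 \<le> (\<Sum>y\<in>N x. cmod (g y))\<^sup>2"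
        by (simp add: power_mono)
      also have "\<dots> \<le> (\<Sum>y\<in>N x. (cmod (g y))\<^sup>2) * card (N x)"
        by (rule sum_squared_le_sum_of_squares)
      also have "\<dots> \<le> (\<Sum>y\<in>N x. (cmod (g y))\<^sup>2) * M"
        using deg_le[of x] unfolding deg_def N_def
        by (intro mult_left_mono) (auto simp: sum_nonneg)
      finally show ?thesis by (simp add: mult.commute)
    qed
    have "(\<Sum>x\<in>F. (cmod (opA Adj g x))\<^sup>2) \<le> (\<Sum>x\<in>F. M * (\<Sum>y\<in>N x. (cmod (g y))\<^sup>2))"
      by (rule sum_mono) (rule p1)
    also have "\<dots> = M * (\<Sum>x\<in>F. \<Sum>y\<in>{y. y \<in> G \<and> Adj x y}. (cmod (g y))\<^sup>2)"
    proof -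
      have "N x = {y. y \<in> G \<and> Adj x y}" if "x \<in> F" for x
        using that unfolding G_def N_def by auto
      then show ?thesis by (simp add: sum_distrib_left)
    qed
    also have "\<dots> = M * (\<Sum>y\<in>G. \<Sum>x\<in>{x. x \<in> F \<and> Adj x y}. (cmod (g y))\<^sup>2)"
      using sum.swap_restrict[OF F G, of "\<lambda>x y. (cmod (g y))\<^sup>2" Adj] by simp
    also have "\<dots> = M * (\<Sum>y\<in>G. card {x. x \<in> F \<and> Adj x y} * (cmod (g y))\<^sup>2)"
      by simp
    also have "\<dots> \<le> M * (\<Sum>y\<in>G. M * (cmod (g y))\<^sup>2)"
    proof (intro mult_left_mono sum_mono M_nonneg)
      fix y assume "y \<in> G"
      have "{x. x \<in> F \<and> Adj x y} \<subseteq> {x. Adj y x}" using sym by auto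
      then have "card {x. x \<in> F \<and> Adj x y} \<le> deg Adj y" unfolding deg_def
        using fin by (intro card_mono) auto
      then have "real (card {x. x \<in> F \<and> Adj x y}) \<le> M" using deg_le[of y] by linarith
      then show "real (card {x. x \<in> F \<and> Adj x y}) * (cmod (g y))\<^sup>2 \<le> M * (cmod (g y))\<^sup>2"
        by (intro mult_right_mono) auto
    qed
    also have "\<dots> = M * M * (\<Sum>y\<in>G. (cmod (g y))\<^sup>2)" by (simp add: sum_distrib_left mult.assoc)
    also have "\<dots> \<le> M * M * a\<^sup>2"
      using bnd_sumsq[OF g G] M_nonneg by (intro mult_left_mono) auto
    also have "\<dots> = (M * a)\<^sup>2" by (simp add: power2_eq_square)
    finally show "(\<Sum>x\<in>F. (cmod (opA Adj g x))\<^sup>2) \<le> (M * a)\<^sup>2" .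
  qed
qed

lemma opb_opQ: "opb (opQ Adj) M"
  unfolding opb_def
proof (intro conjI allI impI)
  show "0 \<le> M" by (rule M_nonneg)
  fix g :: "'v \<Rightarrow> complex" and a assume g: "bnd g a"
  show "bnd (opQ Adj g) (M * a)"
  proof (rule bnd_pointwise[OF g M_nonneg])
    fix x
    have "cmod (of_nat (deg Adj x) - 1 :: complex) = \<bar>real (deg Adj x) - 1\<bar>"
      by (metis norm_of_real of_real_1 of_real_diff of_real_of_nat_eq real_norm_def)
    also have "\<dots> \<le> M" using deg_le[of x] Mpos by linarith
    finally show "cmod (opQ Adj g x) \<le> M * cmod (g x)"
      unfolding opQ_def by (simp add: norm_mult mult_right_mono)
  qed
qed

definition rr :: "complex \<Rightarrow> real" where "rr v = cmod v * M + (cmod v)\<^sup>2 * M"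

lemma opb_fop: "opb (fop Adj v) (rr v)"
  unfolding opb_def
proof (intro conjI allI impI)
  show "0 \<le> rr v" unfolding rr_def using M_nonneg by simp
  fix g :: "'v \<Rightarrow> complex" and a assume g: "bnd g a"
  have "bnd (\<lambda>x. v * opA Adj g x - v\<^sup>2 * opQ Adj g x) (cmod v * (M * a) + cmod (v\<^sup>2) * (M * a))"
    by (intro bnd_diff bnd_scale opbD[OF opb_opA g] opbD[OF opb_opQ g])
  then show "bnd (fop Adj v g) (rr v * a)"
    unfolding fop_def rr_def by (simp add: norm_power algebra_simps)
qed

lemma opb_fop': "opb (fop' Adj v) (M + 2 * cmod v * M)"
  unfolding opb_def
proof (intro conjI allI impI)
  show "0 \<le> M + 2 * cmod v * M" using M_nonneg by simp
  fix g :: "'v \<Rightarrow> complex" and a assume g: "bnd g a"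
  have "bnd (\<lambda>x. opA Adj g x - (2 * v) * opQ Adj g x) (M * a + cmod (2 * v) * (M * a))"
    by (intro bnd_diff bnd_scale opbD[OF opb_opA g] opbD[OF opb_opQ g])
  then show "bnd (fop' Adj v g) ((M + 2 * cmod v * M) * a)"
    unfolding fop'_def by (simp add: norm_mult algebra_simps)
qed

lemma opb_commAQ: "opb (commAQ Adj) (2 * M * M)"
  unfolding opb_def
proof (intro conjI allI impI)
  show "0 \<le> 2 * M * M" using M_nonneg by simp
  fix g :: "'v \<Rightarrow> complex" and a assume g: "bnd g a"
  have "bnd (\<lambda>x. opA Adj (opQ Adj g) x - opQ Adj (opA Adj g) x) (M * (M * a) + M * (M * a))"
    by (intro bnd_diff opbD[OF opb_opA] opbD[OF opb_opQ] g)
  then show "bnd (commAQ Adj g) (2 * M * M * a)"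
    unfolding commAQ_def by (simp add: algebra_simps)
qed

end

lemma series_bnd:
  assumes b: "\<And>n. bnd (T n) (b n)" and s: "summable b"
  shows "(\<lambda>n. T n x) sums (\<Sum>n. T n x)" "bnd (\<lambda>x. \<Sum>n. T n x) (\<Sum>n. b n)"
proof -
  have sm: "summable (\<lambda>n. T n y)" for y
    by (rule summable_comparison_test[OF _ s]) (auto intro: bnd_point[OF b])
  then show "(\<lambda>n. T n x) sums (\<Sum>n. T n x)" by (simp add: summable_sums)
  have nn: "0 \<le> b n" for n using bnd_nonneg[OF b] .
  show "bnd (\<lambda>x. \<Sum>n. T n x) (\<Sum>n. b n)"
  proof (rule bnd_limit)
    show "(\<lambda>N. \<Sum>n<N. T n x) \<longlonglongrightarrow> (\<Sum>n. T n x)" for x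
      using sm summable_LIMSEQ by blast
    fix N
    have "bnd (\<lambda>x. \<Sum>n<N. T n x) (\<Sum>n<N. b n)" by (rule bnd_sum) (auto intro: b)
    moreover have "(\<Sum>n<N. b n) \<le> (\<Sum>n. b n)" using sum_le_suminf[OF s, of "{..<N}"] nn by simp
    ultimately show "bnd (\<lambda>x. \<Sum>n<N. T n x) (\<Sum>n. b n)" by (rule bnd_mono)
  qed
qed

lemma tail_tendsto: assumes "summable (b :: nat \<Rightarrow> real)" shows "(\<lambda>N. \<Sum>n. b (n + N)) \<longlonglongrightarrow> 0"
proof -
  have "(\<lambda>N. (\<Sum>n. b n) - (\<Sum>i<N. b i)) \<longlonglongrightarrow> (\<Sum>n. b n) - (\<Sum>n. b n)"
    by (intro tendsto_diff tendsto_const summable_LIMSEQ assms)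
  then show ?thesis using suminf_minus_initial_segment[OF assms] by simp
qed

definition opsum :: "(nat \<Rightarrow> 'v op) \<Rightarrow> 'v op" where
  "opsum T = (\<lambda>g x. \<Sum>n. T n g x)"

lemma opsum_sums:
  fixes T :: "nat \<Rightarrow> 'v op"
  assumes "\<And>n. opb (T n) (b n)" "summable b" "bnd g a"
  shows "(\<lambda>n. T n g x) sums (opsum T g x)"
  unfolding opsum_def
  by (rule series_bnd(1)[where b="\<lambda>n. b n * a"]) (auto intro: opbD[OF assms(1) assms(3)] summable_mult2[OF assms(2)])

lemma opsum_opb:
  fixes T :: "nat \<Rightarrow> 'v op"
  assumes T: "\<And>n. opb (T n) (b n)" and s: "summable b"
  shows "opb (opsum T) (\<Sum>n. b n)"
  unfolding opb_def
proof (intro conjI allI impI)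
  show "0 \<le> (\<Sum>n. b n)" by (rule suminf_nonneg[OF s]) (rule opb_nonneg[OF T])
  fix g :: "'v \<Rightarrow> complex" and a assume g: "bnd g a"
  have "bnd (\<lambda>x. \<Sum>n. T n g x) (\<Sum>n. b n * a)"
    by (rule series_bnd(2)) (auto intro: opbD[OF T g] summable_mult2[OF s])
  then show "bnd (opsum T g) ((\<Sum>n. b n) * a)"
    unfolding opsum_def using suminf_mult2[OF s] by simp
qed

lemma opsum_op_sums:
  fixes T :: "nat \<Rightarrow> 'v op"
  assumes T: "\<And>n. opb (T n) (b n)" and s: "summable b"
  shows "op_sums T (opsum T)"
  unfolding op_sums_def op_tendsto_def
proof (intro allI impI)
  fix e :: real assume e: "e > 0"
  have "eventually (\<lambda>N. (\<Sum>n. b (n + N)) < e) sequentially"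
    using tail_tendsto[OF s] e by (simp add: order_tendsto_iff)
  then show "eventually (\<lambda>N. op_bound (op_diff (\<lambda>g x. \<Sum>n<N. T n g x) (opsum T)) e) sequentially"
  proof (rule eventually_mono)
    fix N assume N: "(\<Sum>n. b (n + N)) < e"
    have sN: "summable (\<lambda>n. b (n + N))" using s by (rule summable_ignore_initial_segment)
    have "opb (op_diff (\<lambda>g x. \<Sum>n<N. T n g x) (opsum T)) (\<Sum>n. b (n + N))"
      unfolding opb_def
    proof (intro conjI allI impI)
      show "0 \<le> (\<Sum>n. b (n + N))" by (rule suminf_nonneg[OF sN]) (rule opb_nonneg[OF T])
      fix g :: "'v \<Rightarrow> complex" and a assume g: "bnd g a"
      have sm: "summable (\<lambda>n. T n g x)" for x
        using opsum_sums[OF T s g] sums_summable by blast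
      have eq: "op_diff (\<lambda>g x. \<Sum>n<N. T n g x) (opsum T) g = (\<lambda>x. - (\<Sum>n. T (n + N) g x))"
        unfolding op_diff_def opsum_def
        using suminf_split_initial_segment[OF sm, of _ N] by (auto simp: fun_eq_iff)
      have "bnd (\<lambda>x. \<Sum>n. T (n + N) g x) (\<Sum>n. b (n + N) * a)"
        by (rule series_bnd(2)) (auto intro: opbD[OF T g] summable_mult2[OF sN])
      then show "bnd (op_diff (\<lambda>g x. \<Sum>n<N. T n g x) (opsum T) g) ((\<Sum>n. b (n + N)) * a)"
        unfolding eq using suminf_mult2[OF sN] by (simp add: bnd_uminus)
    qed
    then have "opb (op_diff (\<lambda>g x. \<Sum>n<N. T n g x) (opsum T)) e"
      using opb_mono N by fastforce
    then show "op_bound (op_diff (\<lambda>g x. \<Sum>n<N. T n g x) (opsum T)) e" by (rule opb_op_bound)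
  qed
qed

lemma op_sums_unique:
  fixes T :: "nat \<Rightarrow> 'v op"
  assumes "op_sums T S" "g \<in> ell2"
  shows "(\<lambda>n. T n g x) sums (S g x)"
  unfolding sums_def tendsto_iff
proof (intro allI impI)
  fix e :: real assume e: "e > 0"
  define \<epsilon> where "\<epsilon> = e / (l2norm g + 1)"
  have ep: "\<epsilon> > 0" unfolding \<epsilon>_def using e l2norm_nonneg[of g] by simp
  have "eventually (\<lambda>N. op_bound (op_diff (\<lambda>g x. \<Sum>n<N. T n g x) S) \<epsilon>) sequentially"
    using assms(1) ep unfolding op_sums_def op_tendsto_def by blast
  then show "eventually (\<lambda>N. dist (\<Sum>n<N. T n g x) (S g x) < e) sequentially"
  proof (rule eventually_mono)
    fix N assume "op_bound (op_diff (\<lambda>g x. \<Sum>n<N. T n g x) S) \<epsilon>"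
    then have "op_diff (\<lambda>g x. \<Sum>n<N. T n g x) S g \<in> ell2"
      "l2norm (op_diff (\<lambda>g x. \<Sum>n<N. T n g x) S g) \<le> \<epsilon> * l2norm g"
      using assms(2) unfolding op_bound_def by auto
    then have "cmod ((\<Sum>n<N. T n g x) - S g x) \<le> \<epsilon> * l2norm g"
      using ell2_point[of "op_diff (\<lambda>g x. \<Sum>n<N. T n g x) S g" x] unfolding op_diff_def by simp
    also have "\<dots> < e" unfolding \<epsilon>_def using e l2norm_nonneg[of g]
      by (simp add: field_simps)
    finally show "dist (\<Sum>n<N. T n g x) (S g x) < e" by (simp add: dist_norm)
  qed
qed

lemma summ_lin: assumes "0 \<le> (q::real)" "q < 1" shows "summable (\<lambda>n. real (Suc n) * q^n)"
proof (rule summable_ratio_test[where c="(1+q)/2" and N="nat (ceiling (2/(1-q)))"])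
  show "(1+q)/2 < 1" using assms by simp
  fix n assume n: "nat (ceiling (2/(1-q))) \<le> n"
  then have "2/(1-q) \<le> real n" by linarith
  then have n2: "2 \<le> real n * (1 - q)" using assms by (simp add: field_simps)
  have id: "(1+q)*(real n+1) - 2*(real n+2)*q = real n*(1-q) + 1 - 3*q" by algebra
  have "2*(real n+2)*q \<le> (1+q)*(real n+1)" using id n2 assms by linarith
  then have "real (Suc (Suc n)) * q \<le> (1 + q) / 2 * real (Suc n)"
    by (simp add: field_simps)
  then have "real (Suc (Suc n)) * q * q^n \<le> (1 + q) / 2 * real (Suc n) * q^n"
    using assms by (intro mult_right_mono) auto
  then show "norm (real (Suc (Suc n)) * q ^ Suc n) \<le> (1 + q) / 2 * norm (real (Suc n) * q ^ n)"
    using assms by (simp add: abs_mult mult.assoc mult.left_commute)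
qed

primrec Tr :: "('v \<Rightarrow> 'v \<Rightarrow> bool) \<Rightarrow> complex \<Rightarrow> nat \<Rightarrow> 'v op" where
  "Tr Adj u 0 = (\<lambda>g x. 0)"
| "Tr Adj u (Suc n) = (\<lambda>g x. fop' Adj u ((fop Adj u ^^ n) g) x + fop Adj u (Tr Adj u n g) x)"

definition Vc :: "('v \<Rightarrow> 'v \<Rightarrow> bool) \<Rightarrow> complex \<Rightarrow> nat \<Rightarrow> 'v op" where
  "Vc Adj u m g = (\<lambda>x. \<Sum>j\<in>{1..m}. of_nat j * ((fop Adj u ^^ (m - j)) (commAQ Adj ((fop Adj u ^^ (j - 1)) g))) x)"

lemma comm_term_Vc: "comm_term Adj u m g x = (1 / of_nat (Suc m)) * Vc Adj u m g x"
  unfolding comm_term_def Vc_def by simp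

lemma Vc_Suc: "Vc Adj u (Suc m) g = (\<lambda>x. fop Adj u (Vc Adj u m g) x + of_nat (Suc m) * commAQ Adj ((fop Adj u ^^ m) g) x)"
proof -
  let ?f = "fop Adj u"
  let ?X = "\<lambda>j. commAQ Adj ((?f ^^ (j - 1)) g)"
  have "Vc Adj u (Suc m) g = (\<lambda>x. (\<Sum>j\<in>{1..m}. of_nat j * ((?f ^^ (Suc m - j)) (?X j)) x)
        + of_nat (Suc m) * ((?f ^^ (Suc m - Suc m)) (?X (Suc m))) x)"
    unfolding Vc_def by (simp add: add.commute)
  also have "\<dots> = (\<lambda>x. (\<Sum>j\<in>{1..m}. of_nat j * ?f ((?f ^^ (m - j)) (?X j)) x)
        + of_nat (Suc m) * commAQ Adj ((?f ^^ m) g) x)"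
  proof -
    have "(?f ^^ (Suc m - j)) = ?f \<circ> (?f ^^ (m - j))" if "j \<in> {1..m}" for j
      using that by (simp add: Suc_diff_le)
    then show ?thesis by (intro ext arg_cong2[where f="(+)"] sum.cong) auto
  qed
  also have "\<dots> = (\<lambda>x. ?f (Vc Adj u m g) x + of_nat (Suc m) * commAQ Adj ((?f ^^ m) g) x)"
    unfolding Vc_def
    by (simp add: lin_sum[OF lin_fop] lin_scale[OF lin_fop])
  finally show ?thesis .
qed

lemma key_identity:
  "(\<lambda>x. of_nat (Suc m) * fop' Adj u ((fop Adj u ^^ m) g) x - Tr Adj u (Suc m) g x)
     = (\<lambda>x. u\<^sup>2 * Vc Adj u m g x)"
proof (induction m)
  case 0
  then show ?case by (simp add: Vc_def lin_zero[OF lin_fop])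
next
  case (Suc m)
  let ?f = "fop Adj u" and ?f' = "fop' Adj u"
  let ?h = "(?f ^^ m) g"
  have "(\<lambda>x. of_nat (Suc (Suc m)) * ?f' ((?f ^^ Suc m) g) x - Tr Adj u (Suc (Suc m)) g x)
      = (\<lambda>x. of_nat (Suc m) * ?f' (?f ?h) x - ?f (Tr Adj u (Suc m) g) x)"
    by (simp add: algebra_simps)
  also have "\<dots> = (\<lambda>x. of_nat (Suc m) * (?f (?f' ?h) x + u\<^sup>2 * commAQ Adj ?h x) - ?f (Tr Adj u (Suc m) g) x)"
    by (simp add: comm_identity)
  also have "\<dots> = (\<lambda>x. ?f (\<lambda>x. of_nat (Suc m) * ?f' ?h x - Tr Adj u (Suc m) g x) x
        + of_nat (Suc m) * u\<^sup>2 * commAQ Adj ?h x)"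
    by (simp add: lin_diff[OF lin_fop] lin_scale[OF lin_fop] lin_add[OF lin_fop] algebra_simps)
  also have "\<dots> = (\<lambda>x. ?f (\<lambda>x. u\<^sup>2 * Vc Adj u m g x) x + of_nat (Suc m) * u\<^sup>2 * commAQ Adj ?h x)"
    using Suc.IH by simp
  also have "\<dots> = (\<lambda>x. u\<^sup>2 * Vc Adj u (Suc m) g x)"
    by (simp add: Vc_Suc lin_scale[OF lin_fop] algebra_simps)
  finally show ?case .
qed

lemma term_identity:
  "fop' Adj u ((fop Adj u ^^ m) g) x = (1 / of_nat (Suc m)) * Tr Adj u (Suc m) g x + u\<^sup>2 * comm_term Adj u m g x"
proof -
  have "of_nat (Suc m) * fop' Adj u ((fop Adj u ^^ m) g) x - Tr Adj u (Suc m) g x = u\<^sup>2 * Vc Adj u m g x"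
    using key_identity[where m=m and Adj=Adj and u=u and g=g] by (simp add: fun_eq_iff)
  then show ?thesis unfolding comm_term_Vc
    by (simp add: field_simps del: of_nat_Suc)
qed

lemma alpha_sq: assumes "0 \<le> sup_deg Adj"
  shows "(alpha Adj)\<^sup>2 = sup_deg Adj * alpha Adj + sup_deg Adj"
proof -
  define M where "M = sup_deg Adj"
  define s where "s = sqrt (M\<^sup>2 + 4 * M)"
  define al where "al = alpha Adj"
  have M: "0 \<le> M" using assms M_def by simp
  have s2: "s * s = M * M + 4 * M" unfolding s_def using M by (simp add: power2_eq_square[symmetric])
  have a2: "2 * al = M + s" unfolding al_def alpha_def s_def M_def by simp
  have e1: "4 * (al * al) = (M + s) * (M + s)"
  proof -
    have "(2 * al) * (2 * al) = (M + s) * (M + s)" using a2 by simp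
    then show ?thesis by (simp add: algebra_simps)
  qed
  have e2: "(M + s) * (M + s) = M * M + 2 * (M * s) + s * s" by (simp add: algebra_simps)
  have e3: "4 * (M * al) = 2 * (M * M) + 2 * (M * s)"
  proof -
    have "2 * M * (2 * al) = 2 * M * (M + s)" using a2 by simp
    then show ?thesis by (simp add: algebra_simps)
  qed
  have e4: "4 * (M * al + M) = 4 * (M * al) + 4 * M" by simp
  have "4 * (al * al) = 4 * (M * al + M)" using e1 e2 e3 e4 s2 by linarith
  then show ?thesis unfolding al_def M_def power2_eq_square by simp
qed

context grph begin

lemma alpha_pos: "0 < alpha Adj"
  unfolding alpha_def using Mpos by (simp add: add_pos_nonneg)

lemma small_lt1: assumes t: "0 \<le> t" "t < 1 / alpha Adj" shows "M * t + t\<^sup>2 * M < 1"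
proof -
  define a where "a = alpha Adj"
  have a: "0 < a" unfolding a_def by (rule alpha_pos)
  have a2: "a * a = M * a + M" using alpha_sq[OF M_nonneg] unfolding a_def by (simp add: power2_eq_square)
  define s where "s = t * a"
  have ta: "t < 1 / a" using t(2) unfolding a_def .
  have s: "0 \<le> s" "s < 1" unfolding s_def using t(1) a ta pos_less_divide_eq[OF a, of t 1] by auto
  have ss: "s * s \<le> s * 1" using s by (intro mult_left_mono) auto
  have M0: "0 < M" using Mpos by simp
  have i1: "M * a * s \<le> M * a * 1" using s a M_nonneg by (intro mult_left_mono) auto
  have i2: "M * (s * s) < M * 1" using ss s M0 by (intro mult_strict_left_mono) auto
  have eq: "M * a * s + M * (s * s) = (M * t + t\<^sup>2 * M) * (a * a)"
    unfolding s_def by (simp add: power2_eq_square algebra_simps)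
  have "(M * t + t\<^sup>2 * M) * (a * a) < a * a" using i1 i2 a2 eq by linarith
  then have "(M * t + t\<^sup>2 * M) * (a * a) < 1 * (a * a)" by simp
  then show ?thesis by (rule mult_right_less_imp_less) (use a in simp)
qed

lemma rr_mono: assumes "cmod v \<le> t" shows "rr v \<le> M * t + t\<^sup>2 * M"
proof -
  have 1: "cmod v * M \<le> M * t" using mult_right_mono[OF assms M_nonneg] by (simp add: mult.commute)
  have "(cmod v)^2 \<le> t^2" using power_mono[OF assms norm_ge_zero, of 2] .
  then have 2: "(cmod v)^2 * M \<le> t^2 * M" using M_nonneg by (simp add: mult_right_mono)
  show ?thesis unfolding rr_def using 1 2 by linarith
qed

lemma rr_lt1: "cmod v < 1 / alpha Adj \<Longrightarrow> rr v < 1"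
  using small_lt1[of "cmod v"] unfolding rr_def by (simp add: mult.commute)

lemma rr_nonneg: "0 \<le> rr v" unfolding rr_def using M_nonneg by simp

lemma opb_fpow: "opb (fop Adj v ^^ n) (rr v ^ n)"
  by (rule opb_pow[OF opb_fop])

definition FF :: "complex \<Rightarrow> real" where "FF u = M + 2 * cmod u * M"

lemma opb_Tr: "opb (Tr Adj u (Suc n)) (real (Suc n) * FF u * rr u ^ n)"
proof (induction n)
  case 0
  have "opb (\<lambda>g. fop' Adj u g) (FF u)" using opb_fop' unfolding FF_def by simp
  moreover have "Tr Adj u (Suc 0) = (\<lambda>g. fop' Adj u g)"
    by (simp add: lin_zero[OF lin_fop])
  ultimately show ?case by simp
next
  case (Suc n)
  show ?case unfolding opb_def
  proof (intro conjI allI impI)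
    show "0 \<le> real (Suc (Suc n)) * FF u * rr u ^ Suc n"
      unfolding FF_def using rr_nonneg M_nonneg by simp
    fix g :: "'v \<Rightarrow> complex" and a assume g: "bnd g a"
    have "bnd (\<lambda>x. fop' Adj u ((fop Adj u ^^ Suc n) g) x + fop Adj u (Tr Adj u (Suc n) g) x)
        (FF u * (rr u ^ Suc n * a) + rr u * (real (Suc n) * FF u * rr u ^ n * a))"
      by (intro bnd_add opbD[OF opb_fop'[folded FF_def]] opbD[OF opb_fop] opbD[OF opb_fpow] opbD[OF Suc.IH] g)
    then show "bnd (Tr Adj u (Suc (Suc n)) g) (real (Suc (Suc n)) * FF u * rr u ^ Suc n * a)"
      by (simp add: algebra_simps)
  qed
qed

definition R0 :: "complex \<Rightarrow> 'v op" where "R0 u = opsum (\<lambda>n. fop Adj u ^^ n)"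

lemma geo_summ: "cmod u < 1 / alpha Adj \<Longrightarrow> summable (\<lambda>n. rr u ^ n)"
  using rr_lt1 rr_nonneg by (intro summable_geometric) simp

lemma R0_sums: "cmod u < 1 / alpha Adj \<Longrightarrow> bnd g a \<Longrightarrow> (\<lambda>n. (fop Adj u ^^ n) g x) sums (R0 u g x)"
  unfolding R0_def by (rule opsum_sums[OF opb_fpow geo_summ])

lemma R0_opb: "cmod u < 1 / alpha Adj \<Longrightarrow> opb (R0 u) (\<Sum>n. rr u ^ n)"
  unfolding R0_def by (rule opsum_opb[OF opb_fpow geo_summ])

lemma fpow_to0: assumes u: "cmod u < 1 / alpha Adj" and g: "bnd g a"
  shows "(\<lambda>n. (fop Adj u ^^ n) g x) \<longlonglongrightarrow> 0"
proof -
  have "(\<lambda>n. rr u ^ n * a) \<longlonglongrightarrow> 0 * a"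
    using rr_lt1[OF u] rr_nonneg by (intro tendsto_mult LIMSEQ_power_zero tendsto_const) simp
  moreover have "norm ((fop Adj u ^^ n) g x) \<le> rr u ^ n * a" for n
    using bnd_point[OF opbD[OF opb_fpow g]] by simp
  ultimately show ?thesis
    using Lim_null_comparison[of "\<lambda>n. (fop Adj u ^^ n) g x" "\<lambda>n. rr u ^ n * a" sequentially] by simp
qed

lemma R0_right: assumes u: "cmod u < 1 / alpha Adj" and g: "bnd g a"
  shows "one_minus_f Adj u (R0 u g) = g"
proof
  fix x
  have s1: "(\<lambda>n. (fop Adj u ^^ n) g x) sums (R0 u g x)" by (rule R0_sums[OF u g])
  have s2: "(\<lambda>n. fop Adj u ((fop Adj u ^^ n) g) x) sums (fop Adj u (R0 u g) x)"
    by (rule sums_fop) (rule R0_sums[OF u g])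
  have t1: "(\<lambda>n. (fop Adj u ^^ n) g x - (fop Adj u ^^ Suc n) g x) sums ((fop Adj u ^^ 0) g x - 0)"
    by (rule telescope_sums'[OF fpow_to0[OF u g]])
  have t2: "(\<lambda>n. (fop Adj u ^^ n) g x - (fop Adj u ^^ Suc n) g x) sums (R0 u g x - fop Adj u (R0 u g) x)"
    using sums_diff[OF s1 s2] by simp
  have "g x = R0 u g x - fop Adj u (R0 u g) x" using sums_unique2[OF t1 t2] by simp
  then show "one_minus_f Adj u (R0 u g) x = g x"
    unfolding one_minus_f_def by simp
qed

lemma opb_omf: "opb (one_minus_f Adj u) (1 + rr u)"
  unfolding opb_def
proof (intro conjI allI impI)
  show "0 \<le> 1 + rr u" using rr_nonneg by (simp add: add_nonneg_nonneg)
  fix g :: "'v \<Rightarrow> complex" and a assume g: "bnd g a"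
  have "bnd (\<lambda>x. g x - fop Adj u g x) (a + rr u * a)" by (intro bnd_diff g opbD[OF opb_fop])
  then show "bnd (one_minus_f Adj u g) ((1 + rr u) * a)" unfolding one_minus_f_def by (simp add: algebra_simps)
qed

lemma R0_left: assumes u: "cmod u < 1 / alpha Adj" and g: "bnd g a"
  shows "R0 u (one_minus_f Adj u g) = g"
proof
  fix x
  have s1: "(\<lambda>n. (fop Adj u ^^ n) (one_minus_f Adj u g) x) sums (R0 u (one_minus_f Adj u g) x)"
    by (rule R0_sums[OF u opbD[OF opb_omf g]])
  have eq: "(fop Adj u ^^ n) (one_minus_f Adj u g) x = (fop Adj u ^^ n) g x - (fop Adj u ^^ Suc n) g x" for n
  proof -
    have "(fop Adj u ^^ n) (one_minus_f Adj u g) = (\<lambda>x. (fop Adj u ^^ n) g x - (fop Adj u ^^ n) (fop Adj u g) x)"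
      unfolding one_minus_f_def by (rule lin_diff[OF lin_pow[OF lin_fop]])
    then show ?thesis by (simp add: funpow_swap1)
  qed
  have t1: "(\<lambda>n. (fop Adj u ^^ n) g x - (fop Adj u ^^ Suc n) g x) sums ((fop Adj u ^^ 0) g x - 0)"
    by (rule telescope_sums'[OF fpow_to0[OF u g]])
  have t2: "(\<lambda>n. (fop Adj u ^^ n) g x - (fop Adj u ^^ Suc n) g x) sums (R0 u (one_minus_f Adj u g) x)"
    using s1 unfolding eq .
  show "R0 u (one_minus_f Adj u g) x = g x" using sums_unique2[OF t1 t2] by simp
qed

lemma R0_inverse: assumes u: "cmod u < 1 / alpha Adj" shows "op_inverse (one_minus_f Adj u) (R0 u)"
  unfolding op_inverse_def
proof (intro conjI ballI)
  show "\<exists>K. op_bound (R0 u) K" using opb_op_bound[OF R0_opb[OF u]] by blast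
  fix g :: "'v \<Rightarrow> complex" assume "g \<in> ell2"
  then have g: "bnd g (l2norm g)" by (rule ell2_bnd)
  show "one_minus_f Adj u g \<in> ell2" using bnd_ell2(1)[OF opbD[OF opb_omf g]] .
  show "R0 u (one_minus_f Adj u g) = g" by (rule R0_left[OF u g])
  show "one_minus_f Adj u (R0 u g) = g" by (rule R0_right[OF u g])
qed

lemma inverse_unique: assumes u: "cmod u < 1 / alpha Adj" and R: "op_inverse (one_minus_f Adj u) R"
  and g: "g \<in> ell2" shows "R g = R0 u g"
proof -
  have gb: "bnd g (l2norm g)" using ell2_bnd[OF g] .
  have "R0 u g \<in> ell2" using bnd_ell2(1)[OF opbD[OF R0_opb[OF u] gb]] .
  then have "R (one_minus_f Adj u (R0 u g)) = R0 u g" using R unfolding op_inverse_def by blast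
  then show ?thesis using R0_right[OF u gb] by simp
qed

definition L0 :: "complex \<Rightarrow> 'v op" where "L0 v = opsum (log_term Adj v)"

lemma opb_log_term: "opb (log_term Adj v m) (rr v ^ Suc m)"
  unfolding opb_def
proof (intro conjI allI impI)
  show "0 \<le> rr v ^ Suc m" using rr_nonneg by simp
  fix g :: "'v \<Rightarrow> complex" and a assume g: "bnd g a"
  have "bnd (\<lambda>x. (- (1 / of_nat (Suc m))) * (fop Adj v ^^ Suc m) g x) (cmod (- (1 / of_nat (Suc m)) :: complex) * (rr v ^ Suc m * a))"
    by (intro bnd_scale opbD[OF opb_fpow g])
  moreover have c1: "cmod (- (1 / of_nat (Suc m)) :: complex) \<le> 1"
  proof -
    have "cmod (of_nat (Suc m) :: complex) = real (Suc m)" by (rule norm_of_nat)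
    then show ?thesis by (simp add: norm_divide del: of_nat_Suc)
  qed
  moreover have X0: "0 \<le> rr v ^ Suc m * a" using rr_nonneg bnd_nonneg[OF g] by simp
  ultimately have "bnd (\<lambda>x. (- (1 / of_nat (Suc m))) * (fop Adj v ^^ Suc m) g x) (rr v ^ Suc m * a)"
    using bnd_mono mult_left_le_one_le[OF X0 norm_ge_zero c1] by blast
  then show "bnd (log_term Adj v m g) (rr v ^ Suc m * a)" unfolding log_term_def by simp
qed

lemma log_summ: "cmod v < 1 / alpha Adj \<Longrightarrow> summable (\<lambda>m. rr v ^ Suc m)"
  using summable_mult[OF geo_summ, of v "rr v"] by simp

lemma L0_op_sums: "cmod v < 1 / alpha Adj \<Longrightarrow> op_sums (log_term Adj v) (L0 v)"
  unfolding L0_def by (rule opsum_op_sums[OF opb_log_term log_summ])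

lemma L0_sums: "cmod v < 1 / alpha Adj \<Longrightarrow> bnd g a \<Longrightarrow> (\<lambda>m. log_term Adj v m g x) sums (L0 v g x)"
  unfolding L0_def by (rule opsum_sums[OF opb_log_term log_summ])

definition S0 :: "complex \<Rightarrow> 'v op" where "S0 u = opsum (comm_term Adj u)"

definition cb :: "complex \<Rightarrow> nat \<Rightarrow> real" where "cb u m = real m * (2 * M * M) * rr u ^ (m - 1)"

lemma opb_comm_term: "opb (comm_term Adj u m) (cb u m)"
  unfolding opb_def
proof (intro conjI allI impI)
  show "0 \<le> cb u m" unfolding cb_def using rr_nonneg M_nonneg by simp
  fix g :: "'v \<Rightarrow> complex" and a assume g: "bnd g a"
  have a: "0 \<le> a" using bnd_nonneg[OF g] .
  define c where "c = 2 * M * M * rr u ^ (m - 1) * a"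
  have c: "0 \<le> c" unfolding c_def using rr_nonneg M_nonneg a by simp
  have inner: "bnd (\<lambda>x. of_nat j * ((fop Adj u ^^ (m - j)) (commAQ Adj ((fop Adj u ^^ (j - 1)) g))) x)
      (real j * c)" if j: "j \<in> {1..m}" for j
  proof -
    have b0: "bnd (\<lambda>x. of_nat j * ((fop Adj u ^^ (m - j)) (commAQ Adj ((fop Adj u ^^ (j - 1)) g))) x)
      (cmod (of_nat j :: complex) * (rr u ^ (m - j) * (2 * M * M * (rr u ^ (j - 1) * a))))"
      by (intro bnd_scale opbD[OF opb_fpow] opbD[OF opb_commAQ] g)
    have pw: "rr u ^ (m - j) * rr u ^ (j - 1) = rr u ^ (m - 1)"
    proof -
      have "(m - j) + (j - 1) = m - 1" using j by auto
      then show ?thesis using power_add[of "rr u" "m - j" "j - 1"] by simp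
    qed
    have "cmod (of_nat j :: complex) * (rr u ^ (m - j) * (2 * M * M * (rr u ^ (j - 1) * a)))
       = real j * (2 * M * M * a) * (rr u ^ (m - j) * rr u ^ (j - 1))"
      by (simp add: mult_ac)
    also have "\<dots> = real j * (2 * M * M * a) * rr u ^ (m - 1)" using pw by simp
    also have "\<dots> = real j * c"
      unfolding c_def by (simp add: mult_ac)
    finally have eqb: "cmod (of_nat j :: complex) * (rr u ^ (m - j) * (2 * M * M * (rr u ^ (j - 1) * a))) = real j * c" .
    show ?thesis using b0 unfolding eqb .
  qed
  have "bnd (\<lambda>x. \<Sum>j\<in>{1..m}. of_nat j * ((fop Adj u ^^ (m - j)) (commAQ Adj ((fop Adj u ^^ (j - 1)) g))) x)
      (\<Sum>j\<in>{1..m}. real j * c)"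
    by (rule bnd_sum[OF finite_atLeastAtMost inner])
  then have "bnd (\<lambda>x. (1 / of_nat (Suc m)) * (\<Sum>j\<in>{1..m}. of_nat j * ((fop Adj u ^^ (m - j)) (commAQ Adj ((fop Adj u ^^ (j - 1)) g))) x))
      (cmod (1 / of_nat (Suc m) :: complex) * (\<Sum>j\<in>{1..m}. real j * c))"
    by (rule bnd_scale)
  moreover have "cmod (1 / of_nat (Suc m) :: complex) * (\<Sum>j\<in>{1..m}. real j * c) \<le> cb u m * a"
  proof -
    have "(\<Sum>j\<in>{1..m}. real j * c) \<le> (\<Sum>j\<in>{1..m}. real (Suc m) * c)"
      using c by (intro sum_mono mult_right_mono) auto
    also have "\<dots> = real m * real (Suc m) * c" by simp
    finally have fin: "(\<Sum>j\<in>{1..m}. real j * c) / real (Suc m) \<le> real m * c"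
      by (simp add: divide_le_eq mult.commute mult.left_commute del: of_nat_Suc)
    have nn: "cmod (1 / of_nat (Suc m) :: complex) = 1 / real (Suc m)"
    proof -
      have "cmod (of_nat (Suc m) :: complex) = real (Suc m)" by (rule norm_of_nat)
      then show ?thesis by (simp add: norm_divide del: of_nat_Suc)
    qed
    have cbm: "cb u m * a = real m * c" unfolding cb_def c_def by (simp add: mult_ac)
    show ?thesis unfolding nn cbm using fin by (simp del: of_nat_Suc)
  qed
  ultimately show "bnd (comm_term Adj u m g) (cb u m * a)"
    unfolding comm_term_def by (rule bnd_mono)
qed

lemma cb_summ: assumes u: "cmod u < 1 / alpha Adj" shows "summable (cb u)"
proof -
  have "summable (\<lambda>k. (2 * M * M) * (real (Suc k) * rr u ^ k))"
    by (intro summable_mult summ_lin rr_nonneg rr_lt1 u)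
  then have "summable (\<lambda>k. cb u (Suc k))" unfolding cb_def by (simp add: algebra_simps)
  then show ?thesis by (simp add: summable_Suc_iff)
qed

lemma S0_op_sums: "cmod u < 1 / alpha Adj \<Longrightarrow> op_sums (comm_term Adj u) (S0 u)"
  unfolding S0_def by (rule opsum_op_sums[OF opb_comm_term cb_summ])

lemma S0_sums: "cmod u < 1 / alpha Adj \<Longrightarrow> bnd g a \<Longrightarrow> (\<lambda>m. comm_term Adj u m g x) sums (S0 u g x)"
  unfolding S0_def by (rule opsum_sums[OF opb_comm_term cb_summ])

definition dterm :: "complex \<Rightarrow> nat \<Rightarrow> 'v op" where
  "dterm u m g x = - (1 / of_nat (Suc m)) * Tr Adj u (Suc m) g x"

definition D0 :: "complex \<Rightarrow> 'v op" where "D0 u = opsum (dterm u)"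

lemma opb_dterm: "opb (dterm u m) (FF u * rr u ^ m)"
  unfolding opb_def
proof (intro conjI allI impI)
  show "0 \<le> FF u * rr u ^ m" unfolding FF_def using rr_nonneg M_nonneg by simp
  fix g :: "'v \<Rightarrow> complex" and a assume g: "bnd g a"
  have b0: "bnd (\<lambda>x. (- (1 / of_nat (Suc m))) * Tr Adj u (Suc m) g x)
     (cmod (- (1 / of_nat (Suc m)) :: complex) * (real (Suc m) * FF u * rr u ^ m * a))"
    by (intro bnd_scale opbD[OF opb_Tr g])
  have eqb: "cmod (- (1 / of_nat (Suc m)) :: complex) * (real (Suc m) * FF u * rr u ^ m * a) = FF u * rr u ^ m * a"
  proof -
    have "cmod (of_nat (Suc m) :: complex) = real (Suc m)" by (rule norm_of_nat)
    then have "cmod (- (1 / of_nat (Suc m)) :: complex) = 1 / real (Suc m)"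
      by (simp add: norm_divide del: of_nat_Suc)
    then show ?thesis by (simp del: of_nat_Suc)
  qed
  show "bnd (dterm u m g) (FF u * rr u ^ m * a)"
    unfolding dterm_def using b0 unfolding eqb .
qed

lemma dterm_summ: "cmod u < 1 / alpha Adj \<Longrightarrow> summable (\<lambda>m. FF u * rr u ^ m)"
  by (intro summable_mult geo_summ)

lemma D0_sums: "cmod u < 1 / alpha Adj \<Longrightarrow> bnd g a \<Longrightarrow> (\<lambda>m. dterm u m g x) sums (D0 u g x)"
  unfolding D0_def by (rule opsum_sums[OF opb_dterm dterm_summ])

lemma main_identity: assumes u: "cmod u < 1 / alpha Adj" and g: "bnd g a"
  shows "fop' Adj u (R0 u g) = (\<lambda>x. - D0 u g x + u\<^sup>2 * S0 u g x)"
proof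
  fix x
  have s1: "(\<lambda>m. fop' Adj u ((fop Adj u ^^ m) g) x) sums (fop' Adj u (R0 u g) x)"
    by (rule sums_fop') (rule R0_sums[OF u g])
  have s2: "(\<lambda>m. - dterm u m g x + u\<^sup>2 * comm_term Adj u m g x) sums (- D0 u g x + u\<^sup>2 * S0 u g x)"
    by (intro sums_add sums_minus sums_mult D0_sums[OF u g] S0_sums[OF u g])
  have eqm: "(\<lambda>m. fop' Adj u ((fop Adj u ^^ m) g) x) = (\<lambda>m. - dterm u m g x + u\<^sup>2 * comm_term Adj u m g x)"
  proof
    fix m
    have "fop' Adj u ((fop Adj u ^^ m) g) x = (1 / of_nat (Suc m)) * Tr Adj u (Suc m) g x + u\<^sup>2 * comm_term Adj u m g x"
      by (rule term_identity)
    then show "fop' Adj u ((fop Adj u ^^ m) g) x = - dterm u m g x + u\<^sup>2 * comm_term Adj u m g x"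
      unfolding dterm_def by (simp only: mult_minus_left minus_minus)
  qed
  show "fop' Adj u (R0 u g) x = - D0 u g x + u\<^sup>2 * S0 u g x"
    using sums_unique2[OF s1[unfolded eqm] s2] .
qed

end

context grph begin

definition t0 :: "complex \<Rightarrow> real" where "t0 u = (cmod u + 1 / alpha Adj) / 2"
definition dd :: "complex \<Rightarrow> real" where "dd u = (1 / alpha Adj - cmod u) / 2"
definition qq :: "complex \<Rightarrow> real" where "qq u = M * t0 u + (t0 u)\<^sup>2 * M"

lemma qq_facts: assumes u: "cmod u < 1 / alpha Adj"
  shows "qq u < 1" "0 < qq u" "0 < dd u" "rr u \<le> qq u"
    "\<And>h. cmod h < dd u \<Longrightarrow> rr (u + h) \<le> qq u"
proof -
  have ap: "0 < 1 / alpha Adj" using alpha_pos by simp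
  have "0 < cmod u + 1 / alpha Adj" using ap norm_ge_zero[of u] by linarith
  then have t: "0 < t0 u" "t0 u < 1 / alpha Adj" unfolding t0_def using u by auto
  show "qq u < 1" unfolding qq_def by (rule small_lt1) (use t in auto)
  show "0 < qq u" unfolding qq_def using t Mpos by (simp add: add_pos_nonneg)
  show "0 < dd u" unfolding dd_def using u by simp
  show "rr u \<le> qq u" unfolding qq_def by (rule rr_mono) (simp add: t0_def u less_imp_le)
  fix h assume h: "cmod h < dd u"
  have "cmod (u + h) \<le> cmod u + cmod h" by (rule norm_triangle_ineq)
  also have "\<dots> \<le> t0 u" using h unfolding dd_def t0_def by simp
  finally show "rr (u + h) \<le> qq u" unfolding qq_def by (rule rr_mono)
qed

lemma opb_qpow: assumes "rr v \<le> q" shows "opb (fop Adj v ^^ n) (q ^ n)"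
  using opb_mono[OF opb_fpow] power_mono[OF assms rr_nonneg] by blast

lemma delta_eq: "fop Adj (u + h) k x - fop Adj u k x = h * fop' Adj u k x - h\<^sup>2 * opQ Adj k x"
  unfolding fop_def fop'_def by (simp add: power2_eq_square algebra_simps)

definition GG :: "complex \<Rightarrow> real" where "GG u = FF u + M"

lemma FF_nonneg: "0 \<le> FF u" unfolding FF_def using M_nonneg by simp

lemma delta_bnd: assumes h1: "cmod h \<le> 1" and k: "bnd k b"
  shows "bnd (\<lambda>x. fop Adj (u + h) k x - fop Adj u k x) (cmod h * GG u * b)"
proof -
  have b: "0 \<le> b" using bnd_nonneg[OF k] .
  have "bnd (\<lambda>x. h * fop' Adj u k x - h\<^sup>2 * opQ Adj k x) (cmod h * (FF u * b) + cmod (h\<^sup>2) * (M * b))"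
    by (intro bnd_diff bnd_scale opbD[OF opb_fop'[folded FF_def] k] opbD[OF opb_opQ k])
  moreover have "cmod (h\<^sup>2) * (M * b) \<le> cmod h * (M * b)"
  proof -
    have "cmod h * cmod h \<le> cmod h * 1" by (rule mult_left_mono[OF h1 norm_ge_zero])
    then have "cmod (h\<^sup>2) \<le> cmod h" by (simp add: norm_power power2_eq_square norm_mult)
    then show ?thesis using M_nonneg b by (intro mult_right_mono) auto
  qed
  ultimately have "bnd (\<lambda>x. h * fop' Adj u k x - h\<^sup>2 * opQ Adj k x) (cmod h * GG u * b)"
    unfolding GG_def by (auto elim!: bnd_mono simp: algebra_simps)
  then show ?thesis by (simp add: delta_eq)
qed

lemma diffpow_bnd:
  assumes u: "cmod u < 1 / alpha Adj" and hd: "cmod h < dd u" and h1: "cmod h \<le> 1" and g: "bnd g a"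
  shows "bnd (\<lambda>x. (fop Adj (u + h) ^^ Suc n) g x - (fop Adj u ^^ Suc n) g x)
           (real (Suc n) * (cmod h * GG u) * qq u ^ n * a)"
proof (induction n)
  case 0
  show ?case using delta_bnd[OF h1 g] by simp
next
  case (Suc n)
  let ?P = "(fop Adj (u + h) ^^ Suc n) g" and ?F = "(fop Adj u ^^ Suc n) g"
  have Pb: "bnd ?P (qq u ^ Suc n * a)"
    by (rule opbD[OF opb_qpow[OF qq_facts(5)[OF u hd]] g])
  have eq: "(\<lambda>x. (fop Adj (u + h) ^^ Suc (Suc n)) g x - (fop Adj u ^^ Suc (Suc n)) g x)
     = (\<lambda>x. (fop Adj (u + h) ?P x - fop Adj u ?P x) + fop Adj u (\<lambda>y. ?P y - ?F y) x)"
    by (simp add: lin_diff[OF lin_fop])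
  have "bnd (\<lambda>x. (fop Adj (u + h) ?P x - fop Adj u ?P x) + fop Adj u (\<lambda>y. ?P y - ?F y) x)
     (cmod h * GG u * (qq u ^ Suc n * a) + qq u * (real (Suc n) * (cmod h * GG u) * qq u ^ n * a))"
    by (intro bnd_add delta_bnd[OF h1 Pb] opbD[OF opb_mono[OF opb_fop qq_facts(4)[OF u]] Suc.IH])
  then show ?case unfolding eq by (simp add: algebra_simps)
qed

definition EE :: "complex \<Rightarrow> complex \<Rightarrow> nat \<Rightarrow> 'v op" where
  "EE u h n g x = ((fop Adj (u + h) ^^ n) g x - (fop Adj u ^^ n) g x) / h - Tr Adj u n g x"

lemma EE_Suc: assumes h: "h \<noteq> 0"
  shows "EE u h (Suc k) g = (\<lambda>x. fop Adj u (EE u h k g) x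
      + fop' Adj u (\<lambda>y. (fop Adj (u + h) ^^ k) g y - (fop Adj u ^^ k) g y) x
      - h * opQ Adj ((fop Adj (u + h) ^^ k) g) x)"
proof
  fix x
  let ?P = "(fop Adj (u + h) ^^ k) g" and ?F = "(fop Adj u ^^ k) g"
  have EEeq: "EE u h k g = (\<lambda>x. (1 / h) * (?P x - ?F x) - Tr Adj u k g x)"
    unfolding EE_def by (simp add: fun_eq_iff)
  have a1: "fop Adj u (EE u h k g) = (\<lambda>x. fop Adj u (\<lambda>x. (1 / h) * (?P x - ?F x)) x - fop Adj u (Tr Adj u k g) x)"
    unfolding EEeq by (rule lin_diff[OF lin_fop])
  have a2: "fop Adj u (\<lambda>x. (1 / h) * (?P x - ?F x)) = (\<lambda>x. (1 / h) * fop Adj u (\<lambda>x. ?P x - ?F x) x)"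
    by (rule lin_scale[OF lin_fop])
  have a3: "fop Adj u (\<lambda>x. ?P x - ?F x) = (\<lambda>x. fop Adj u ?P x - fop Adj u ?F x)"
    by (rule lin_diff[OF lin_fop])
  have e1: "fop Adj u (EE u h k g) x = (1 / h) * (fop Adj u ?P x - fop Adj u ?F x) - fop Adj u (Tr Adj u k g) x"
    unfolding a1 a2 a3 by simp
  have e2: "fop' Adj u (\<lambda>y. ?P y - ?F y) x = fop' Adj u ?P x - fop' Adj u ?F x"
    by (simp add: lin_diff[OF lin_fop'])
  have e3: "fop Adj (u + h) ?P x = fop Adj u ?P x + h * fop' Adj u ?P x - h\<^sup>2 * opQ Adj ?P x"
    using delta_eq[of u h ?P x] by (simp add: algebra_simps)
  show "EE u h (Suc k) g x = fop Adj u (EE u h k g) x + fop' Adj u (\<lambda>y. ?P y - ?F y) x - h * opQ Adj ?P x"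
  proof -
    have "EE u h (Suc k) g x = ((fop Adj u ?P x + h * fop' Adj u ?P x - h\<^sup>2 * opQ Adj ?P x) - fop Adj u ?F x) / h
       - (fop' Adj u ?F x + fop Adj u (Tr Adj u k g) x)"
      unfolding EE_def by (simp add: e3)
    also have "\<dots> = fop Adj u (EE u h k g) x + fop' Adj u (\<lambda>y. ?P y - ?F y) x - h * opQ Adj ?P x"
      unfolding e1 e2 using h by (simp add: field_simps power2_eq_square)
    finally show ?thesis .
  qed
qed

end

lemma aux_ineq: fixes B q F G M N :: real
  assumes "0 < q" "0 \<le> F" "0 \<le> G" "0 \<le> M" "0 \<le> N" "B * q = M * q + F * G"
  shows "q * B * (N + 1)\<^sup>2 + F * G * (N + 1) + M * q \<le> B * (N + 2)\<^sup>2 * q"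
proof -
  have e: "B * (N + 2)\<^sup>2 * q - (q * B * (N + 1)\<^sup>2 + F * G * (N + 1) + M * q)
      = (B * q) * (2 * N + 3) - F * G * (N + 1) - M * q"
    by (simp add: power2_eq_square algebra_simps)
  also have "\<dots> = (M * q + F * G) * (2 * N + 3) - F * G * (N + 1) - M * q" using assms(6) by simp
  also have "\<dots> = M * q * (2 * N + 2) + F * G * (N + 2)" by (simp add: algebra_simps)
  finally have "B * (N + 2)\<^sup>2 * q - (q * B * (N + 1)\<^sup>2 + F * G * (N + 1) + M * q) = M * q * (2 * N + 2) + F * G * (N + 2)" .
  moreover have "0 \<le> M * q * (2 * N + 2) + F * G * (N + 2)" using assms by simp
  ultimately show ?thesis by linarith
qed

context grph begin

definition BB :: "complex \<Rightarrow> real" where "BB u = M + FF u * GG u / qq u"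

lemma BB_eq: assumes u: "cmod u < 1 / alpha Adj" shows "BB u * qq u = M * qq u + FF u * GG u"
  using qq_facts(2)[OF u] unfolding BB_def by (simp add: field_simps)

lemma GG_nonneg: "0 \<le> GG u" unfolding GG_def using FF_nonneg M_nonneg by simp

lemma BB_ge: assumes u: "cmod u < 1 / alpha Adj" shows "M \<le> BB u"
  unfolding BB_def using qq_facts(2)[OF u] FF_nonneg GG_nonneg by simp

lemma EE_bnd:
  assumes u: "cmod u < 1 / alpha Adj" and hd: "cmod h < dd u" and h1: "cmod h \<le> 1" and h: "h \<noteq> 0"
    and g: "bnd g a"
  shows "bnd (EE u h (Suc n) g) (cmod h * BB u * (real (Suc n))\<^sup>2 * qq u ^ n * a)"
proof (induction n)
  case 0
  have a: "0 \<le> a" using bnd_nonneg[OF g] .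
  have z: "EE u h 0 g = (\<lambda>x. 0)" by (simp add: EE_def fun_eq_iff)
  have "EE u h (Suc 0) g = (\<lambda>x. (- h) * opQ Adj g x)"
    using EE_Suc[OF h, of u 0 g] by (simp add: z lin_zero[OF lin_fop] lin_zero[OF lin_fop'])
  moreover have "bnd (\<lambda>x. (- h) * opQ Adj g x) (cmod (- h) * (M * a))"
    by (intro bnd_scale opbD[OF opb_opQ g])
  moreover have "cmod (- h) * (M * a) \<le> cmod h * BB u * (real (Suc 0))\<^sup>2 * qq u ^ 0 * a"
  proof -
    have "M * a \<le> BB u * a" by (rule mult_right_mono[OF BB_ge[OF u] a])
    then have "cmod h * (M * a) \<le> cmod h * (BB u * a)" by (rule mult_left_mono) simp
    then show ?thesis by (simp add: mult.assoc)
  qed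
  ultimately show ?case by (auto elim: bnd_mono)
next
  case (Suc n)
  let ?P = "(fop Adj (u + h) ^^ Suc n) g" and ?F = "(fop Adj u ^^ Suc n) g"
  have a: "0 \<le> a" using bnd_nonneg[OF g] .
  have Pb: "bnd ?P (qq u ^ Suc n * a)"
    by (rule opbD[OF opb_qpow[OF qq_facts(5)[OF u hd]] g])
  have b1: "bnd (EE u h (Suc (Suc n)) g)
      (qq u * (cmod h * BB u * (real (Suc n))\<^sup>2 * qq u ^ n * a)
       + FF u * (real (Suc n) * (cmod h * GG u) * qq u ^ n * a)
       + cmod h * (M * (qq u ^ Suc n * a)))"
    unfolding EE_Suc[OF h, of u "Suc n" g]
    by (intro bnd_diff bnd_add bnd_scale opbD[OF opb_mono[OF opb_fop qq_facts(4)[OF u]] Suc.IH]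
        opbD[OF opb_fop'[folded FF_def] diffpow_bnd[OF u hd h1 g]] opbD[OF opb_opQ Pb])
  define c where "c = cmod h * qq u ^ n * a"
  have c: "0 \<le> c" unfolding c_def using qq_facts(2)[OF u] a by simp
  have "qq u * (cmod h * BB u * (real (Suc n))\<^sup>2 * qq u ^ n * a)
       + FF u * (real (Suc n) * (cmod h * GG u) * qq u ^ n * a)
       + cmod h * (M * (qq u ^ Suc n * a))
     = c * (qq u * BB u * (real n + 1)\<^sup>2 + FF u * GG u * (real n + 1) + M * qq u)"
    unfolding c_def by (simp add: algebra_simps)
  also have "\<dots> \<le> c * (BB u * (real n + 2)\<^sup>2 * qq u)"
    by (intro mult_left_mono c aux_ineq qq_facts(2)[OF u] FF_nonneg GG_nonneg M_nonneg BB_eq[OF u]) simp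
  also have "\<dots> = cmod h * BB u * (real (Suc (Suc n)))\<^sup>2 * qq u ^ Suc n * a"
    unfolding c_def by (simp add: algebra_simps)
  finally show ?case using b1 by (auto elim: bnd_mono)
qed

lemma small_h: assumes u: "cmod u < 1 / alpha Adj" and hd: "cmod h < dd u" shows "cmod (u + h) < 1 / alpha Adj"
proof -
  have "cmod (u + h) \<le> cmod u + cmod h" by (rule norm_triangle_ineq)
  moreover have "cmod u + cmod h < 1 / alpha Adj"
  proof -
    have "2 * cmod h < 1 / alpha Adj - cmod u" using hd unfolding dd_def by simp
    then show ?thesis using u by simp
  qed
  ultimately show ?thesis by (rule order_le_less_trans)
qed

definition ZZ :: "complex \<Rightarrow> real" where "ZZ u = (\<Sum>m. real (Suc m) * qq u ^ m)"

lemma ZZ_summ: "cmod u < 1 / alpha Adj \<Longrightarrow> summable (\<lambda>m. real (Suc m) * qq u ^ m)"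
  using qq_facts(1,2)[of u] by (intro summ_lin) auto

lemma ZZ_nonneg: "cmod u < 1 / alpha Adj \<Longrightarrow> 0 \<le> ZZ u"
  unfolding ZZ_def by (intro suminf_nonneg ZZ_summ) (use qq_facts(2)[of u] in simp_all)

lemma deriv_err_bnd:
  assumes u: "cmod u < 1 / alpha Adj" and hd: "cmod h < dd u" and h1: "cmod h \<le> 1" and h: "h \<noteq> 0"
    and g: "bnd g a"
  shows "bnd (\<lambda>x. (L0 (u + h) g x - L0 u g x) / h - D0 u g x) (cmod h * BB u * ZZ u * a)"
proof -
  have uh: "cmod (u + h) < 1 / alpha Adj" by (rule small_h[OF u hd])
  define T where "T m x = - (1 / of_nat (Suc m)) * EE u h (Suc m) g x" for m x
  define b where "b m = (cmod h * BB u * a) * (real (Suc m) * qq u ^ m)" for m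
  have a: "0 \<le> a" using bnd_nonneg[OF g] .
  have Tb: "bnd (T m) (b m)" for m
  proof -
    have "bnd (T m) (cmod (- (1 / of_nat (Suc m)) :: complex) * (cmod h * BB u * (real (Suc m))\<^sup>2 * qq u ^ m * a))"
      unfolding T_def by (intro bnd_scale EE_bnd[OF u hd h1 h g])
    moreover have "cmod (- (1 / of_nat (Suc m)) :: complex) * (cmod h * BB u * (real (Suc m))\<^sup>2 * qq u ^ m * a) = b m"
    proof -
      have "cmod (of_nat (Suc m) :: complex) = real (Suc m)" by (rule norm_of_nat)
      then have "cmod (- (1 / of_nat (Suc m)) :: complex) = 1 / real (Suc m)"
        by (simp add: norm_divide del: of_nat_Suc)
      then show ?thesis unfolding b_def by (simp add: power2_eq_square del: of_nat_Suc)
    qed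
    ultimately show ?thesis by simp
  qed
  have bs: "summable b" unfolding b_def by (intro summable_mult ZZ_summ u)
  have sb: "(\<Sum>m. b m) = cmod h * BB u * ZZ u * a"
    unfolding b_def ZZ_def using suminf_mult[OF ZZ_summ[OF u], of "cmod h * BB u * a"] by (simp add: mult_ac)
  have eqx: "(L0 (u + h) g x - L0 u g x) / h - D0 u g x = (\<Sum>m. T m x)" for x
  proof -
    have s: "(\<lambda>m. (log_term Adj (u + h) m g x - log_term Adj u m g x) / h - dterm u m g x)
        sums ((L0 (u + h) g x - L0 u g x) / h - D0 u g x)"
      by (intro sums_diff sums_divide L0_sums[OF uh g] L0_sums[OF u g] D0_sums[OF u g])
    have "(\<lambda>m. (log_term Adj (u + h) m g x - log_term Adj u m g x) / h - dterm u m g x) = (\<lambda>m. T m x)"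
    proof
      fix m
      show "(log_term Adj (u + h) m g x - log_term Adj u m g x) / h - dterm u m g x = T m x"
        unfolding log_term_def dterm_def T_def EE_def using h
        by (simp add: field_simps del: Tr.simps funpow.simps of_nat_Suc)
    qed
    then have "(\<lambda>m. T m x) sums ((L0 (u + h) g x - L0 u g x) / h - D0 u g x)" using s by simp
    then show ?thesis by (rule sums_unique)
  qed
  have "bnd (\<lambda>x. \<Sum>m. T m x) (\<Sum>m. b m)" by (rule series_bnd(2)[OF Tb bs])
  then show ?thesis unfolding sb eqx[symmetric] .
qed

lemma L0_deriv: assumes u: "cmod u < 1 / alpha Adj" shows "op_has_deriv L0 (D0 u) u"
  unfolding op_has_deriv_def
proof (intro allI impI)
  fix e :: real assume e: "e > 0"
  define K where "K = BB u * ZZ u"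
  have K: "0 \<le> K" unfolding K_def using BB_ge[OF u] M_nonneg ZZ_nonneg[OF u] by simp
  define \<delta> where "\<delta> = min (min (dd u) 1) (e / (K + 1))"
  have dp: "0 < \<delta>" unfolding \<delta>_def using qq_facts(3)[OF u] e K by simp
  show "\<exists>\<delta>>0. \<forall>h. h \<noteq> 0 \<and> cmod h < \<delta> \<longrightarrow>
        op_bound (\<lambda>g x. (L0 (u + h) g x - L0 u g x) / h - D0 u g x) e"
  proof (intro exI conjI allI impI)
    show "0 < \<delta>" by (rule dp)
    fix h assume hh: "h \<noteq> 0 \<and> cmod h < \<delta>"
    then have hd: "cmod h < dd u" and h1: "cmod h \<le> 1" and he: "cmod h < e / (K + 1)" and h: "h \<noteq> 0"
      unfolding \<delta>_def by auto
    have "cmod h * K \<le> cmod h * (K + 1)" by (simp add: mult_left_mono)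
    also have "\<dots> < e" using he K by (simp add: pos_less_divide_eq)
    finally have hK: "cmod h * K \<le> e" by simp
    have "opb (\<lambda>g x. (L0 (u + h) g x - L0 u g x) / h - D0 u g x) (cmod h * K)"
      unfolding opb_def
    proof (intro conjI allI impI)
      show "0 \<le> cmod h * K" using K by simp
      fix g :: "'v \<Rightarrow> complex" and a assume g: "bnd g a"
      show "bnd (\<lambda>x. (L0 (u + h) g x - L0 u g x) / h - D0 u g x) (cmod h * K * a)"
        using deriv_err_bnd[OF u hd h1 h g] unfolding K_def by (simp add: mult.assoc)
    qed
    then have "opb (\<lambda>g x. (L0 (u + h) g x - L0 u g x) / h - D0 u g x) e"
      using opb_mono hK by blast
    then show "op_bound (\<lambda>g x. (L0 (u + h) g x - L0 u g x) / h - D0 u g x) e"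
      by (rule opb_op_bound)
  qed
qed

end

lemma zero_le_all: "(\<And>e. e > 0 \<Longrightarrow> cmod z \<le> e) \<Longrightarrow> z = 0"
proof -
  assume a: "\<And>e. e > 0 \<Longrightarrow> cmod z \<le> e"
  then have "cmod z \<le> 0" by (meson dense not_le)
  then show ?thesis by simp
qed

lemma deriv_unique:
  fixes L L' :: "complex \<Rightarrow> 'v op"
  assumes dL: "op_has_deriv L D u" and dL': "op_has_deriv L' D' u" and r: "r > 0"
    and eq: "\<And>v g. cmod (v - u) < r \<Longrightarrow> g \<in> ell2 \<Longrightarrow> L v g = L' v g" and g: "g \<in> ell2"
  shows "D g = D' g"
proof
  fix x
  define k where "k = l2norm g"
  have k: "0 \<le> k" unfolding k_def by (rule l2norm_nonneg)
  show "D g x = D' g x"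
  proof -
    have "cmod (D g x - D' g x) \<le> e" if e: "e > 0" for e
    proof -
      define \<epsilon> where "\<epsilon> = e / (2 * (k + 1))"
      have ep: "\<epsilon> > 0" unfolding \<epsilon>_def using e k by simp
      obtain d1 where d1: "d1 > 0" "\<And>h. h \<noteq> 0 \<and> cmod h < d1 \<Longrightarrow>
          op_bound (\<lambda>g x. (L (u + h) g x - L u g x) / h - D g x) \<epsilon>"
        using dL ep unfolding op_has_deriv_def by blast
      obtain d2 where d2: "d2 > 0" "\<And>h. h \<noteq> 0 \<and> cmod h < d2 \<Longrightarrow>
          op_bound (\<lambda>g x. (L' (u + h) g x - L' u g x) / h - D' g x) \<epsilon>"
        using dL' ep unfolding op_has_deriv_def by blast
      define t where "t = min (min d1 d2) r / 2"
      have t: "0 < t" "t < d1" "t < d2" "t < r" unfolding t_def using d1 d2 r by auto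
      define h where "h = complex_of_real t"
      have h: "h \<noteq> 0" "cmod h = t" unfolding h_def using t by auto
      have b1: "op_bound (\<lambda>g x. (L (u + h) g x - L u g x) / h - D g x) \<epsilon>" using d1(2) h t by simp
      have b2: "op_bound (\<lambda>g x. (L' (u + h) g x - L' u g x) / h - D' g x) \<epsilon>" using d2(2) h t by simp
      have f1: "(\<lambda>x. (L (u + h) g x - L u g x) / h - D g x) \<in> ell2 \<and>
          l2norm (\<lambda>x. (L (u + h) g x - L u g x) / h - D g x) \<le> \<epsilon> * l2norm g"
        using b1 g unfolding op_bound_def by auto
      have c1: "cmod ((L (u + h) g x - L u g x) / h - D g x) \<le> \<epsilon> * k"
        using ell2_point[OF conjunct1[OF f1], of x] conjunct2[OF f1] unfolding k_def by simp
      have f2: "(\<lambda>x. (L' (u + h) g x - L' u g x) / h - D' g x) \<in> ell2 \<and>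
          l2norm (\<lambda>x. (L' (u + h) g x - L' u g x) / h - D' g x) \<le> \<epsilon> * l2norm g"
        using b2 g unfolding op_bound_def by auto
      have c2: "cmod ((L' (u + h) g x - L' u g x) / h - D' g x) \<le> \<epsilon> * k"
        using ell2_point[OF conjunct1[OF f2], of x] conjunct2[OF f2] unfolding k_def by simp
      have e1: "L (u + h) g = L' (u + h) g" using eq[of "u + h" g] g h t by simp
      have e2: "L u g = L' u g" using eq[of u g] g r by simp
      have deq: "D g x - D' g x = ((L' (u + h) g x - L' u g x) / h - D' g x) - ((L (u + h) g x - L u g x) / h - D g x)"
        using e1 e2 by simp
      have "cmod (D g x - D' g x) \<le> \<epsilon> * k + \<epsilon> * k"
        unfolding deq by (rule order_trans[OF norm_triangle_ineq4 add_mono[OF c2 c1]])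
      also have "\<dots> \<le> e"
      proof -
        have "\<epsilon> * k \<le> \<epsilon> * (k + 1)" using ep by (intro mult_left_mono) auto
        moreover have "\<epsilon> * (k + 1) * 2 = e" unfolding \<epsilon>_def using k by (simp add: field_simps)
        ultimately show ?thesis by linarith
      qed
      finally show ?thesis .
    qed
    then have "D g x - D' g x = 0" by (rule zero_le_all)
    then show ?thesis by simp
  qed
qed

theorem proposition4p3:
  fixes Adj :: "'v::countable \<Rightarrow> 'v \<Rightarrow> bool" and u :: complex
  assumes irrefl: "\<And>x. \<not> Adj x x"
    and sym: "\<And>x y. Adj x y \<Longrightarrow> Adj y x"
    and connected: "\<And>x y. Adj\<^sup>*\<^sup>* x y"
    and bounded_deg: "\<exists>K. \<forall>x. finite {y. Adj x y} \<and> deg Adj x \<le> K"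
    and no_deg_one: "\<And>x. deg Adj x \<noteq> 1"
    and u: "cmod u < 1 / alpha Adj"
  shows "(\<exists>R. op_inverse (one_minus_f Adj u) R)
    \<and> (\<exists>L D S. (\<forall>v. cmod v < 1 / alpha Adj \<longrightarrow> op_sums (log_term Adj v) (L v))
              \<and> op_has_deriv L D u \<and> op_sums (comm_term Adj u) S)
    \<and> (\<forall>R L D S. op_inverse (one_minus_f Adj u) R
          \<and> (\<forall>v. cmod v < 1 / alpha Adj \<longrightarrow> op_sums (log_term Adj v) (L v))
          \<and> op_has_deriv L D u \<and> op_sums (comm_term Adj u) S
          \<longrightarrow> (\<forall>g\<in>ell2. fop' Adj u (R g) = (\<lambda>x. - D g x + u\<^sup>2 * S g x)))"
proof -
  obtain K where K: "\<And>x. finite {y. Adj x y}" "\<And>x. deg Adj x \<le> K" using bounded_deg by blast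
  have Mpos: "1 \<le> sup_deg Adj"
  proof (rule ccontr)
    assume "\<not> 1 \<le> sup_deg Adj"
    then have "sup_deg Adj = 0" unfolding sup_deg_def by simp
    then have "alpha Adj = 0" unfolding alpha_def by simp
    then show False using u by simp
  qed
  interpret G: grph Adj K using irrefl sym K Mpos by unfold_locales auto
  show ?thesis
  proof (intro conjI allI impI ballI)
    show "\<exists>R. op_inverse (one_minus_f Adj u) R" using G.R0_inverse[OF u] by blast
    show "\<exists>L D S. (\<forall>v. cmod v < 1 / alpha Adj \<longrightarrow> op_sums (log_term Adj v) (L v))
              \<and> op_has_deriv L D u \<and> op_sums (comm_term Adj u) S"
      using G.L0_op_sums G.L0_deriv[OF u] G.S0_op_sums[OF u] by blast
    fix R L D S and g :: "'v \<Rightarrow> complex"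
    assume H: "op_inverse (one_minus_f Adj u) R
          \<and> (\<forall>v. cmod v < 1 / alpha Adj \<longrightarrow> op_sums (log_term Adj v) (L v))
          \<and> op_has_deriv L D u \<and> op_sums (comm_term Adj u) S"
      and g: "g \<in> ell2"
    from H have HR: "op_inverse (one_minus_f Adj u) R"
      and HL: "\<forall>v. cmod v < 1 / alpha Adj \<longrightarrow> op_sums (log_term Adj v) (L v)"
      and HD: "op_has_deriv L D u" and HS: "op_sums (comm_term Adj u) S" by auto
    have gb: "bnd g (l2norm g)" by (rule ell2_bnd[OF g])
    have Rg: "R g = G.R0 u g" by (rule G.inverse_unique[OF u HR g])
    have Sg: "S g = G.S0 u g"
    proof
      fix x
      have "(\<lambda>m. comm_term Adj u m g x) sums (S g x)" by (rule op_sums_unique[OF HS g])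
      moreover have "(\<lambda>m. comm_term Adj u m g x) sums (G.S0 u g x)" by (rule G.S0_sums[OF u gb])
      ultimately show "S g x = G.S0 u g x" by (rule sums_unique2)
    qed
    define r where "r = 1 / alpha Adj - cmod u"
    have r: "r > 0" unfolding r_def using u by simp
    have Leq: "L v g' = G.L0 v g'" if v: "cmod (v - u) < r" and g': "g' \<in> ell2" for v g'
    proof
      fix x
      have "cmod v \<le> cmod (v - u) + cmod u" using norm_triangle_ineq[of "v - u" u] by simp
      then have vv: "cmod v < 1 / alpha Adj" using v unfolding r_def by simp
      have "(\<lambda>m. log_term Adj v m g' x) sums (L v g' x)" by (rule op_sums_unique[OF HL[rule_format, OF vv] g'])
      moreover have "(\<lambda>m. log_term Adj v m g' x) sums (G.L0 v g' x)" by (rule G.L0_sums[OF vv ell2_bnd[OF g']])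
      ultimately show "L v g' x = G.L0 v g' x" by (rule sums_unique2)
    qed
    have Dg: "D g = G.D0 u g"
      by (rule deriv_unique[OF HD G.L0_deriv[OF u] r Leq g])
    show "fop' Adj u (R g) = (\<lambda>x. - D g x + u\<^sup>2 * S g x)"
      unfolding Rg Sg Dg by (rule G.main_identity[OF u gb])
  qed
qed

end
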